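(* Let $(\mathcal{H},\langle\cdot,\cdot\rangle)$ be a real Hilbert space with induced norm $\|\cdot\|$. Let $f:\mathcal{H}\to\mathbb{R}$ be $\mu$-strongly convex and $L$-smooth with $0<\mu<L<+\infty$, and let $g:\mathcal{H}\to\mathbb{R}\cup\{+\infty\}$ be convex, proper and lower semicontinuous. Let $q=\mu/L$ and let $((x^k,y^k,z^k,A_k))_{k\in\mathbb{N}_0}$ be generated by the Prox-ITEM method (described in the context) from an arbitrary $x^0\in\mathcal{H}$. Let $x^\star$ be the unique minimizer of $f+g$ over $\mathcal{H}$. Then for every $k\in\mathbb{N}_0$, $$\|z^k-x^\star\|^2\le \frac{1}{1+qA_k}\,\|x^0-x^\star\|^2.$$
   Context: $f$ is $L$-smooth if it is Fréchet differentiable with $L$-Lipschitz gradient; $\mu$-strongly convex means $f-\frac{\mu}{2}\|\cdot\|^2$ is convex. For $\gamma>0$, $\operatorname{Prox}^{\gamma}_g(x)=\operatorname{argmin}_{z\in\mathcal{H}}\big(g(z)+\frac{1}{2\gamma}\|x-z\|^2\big)$. The Prox-ITEM method: set $q=\mu/L$, $A_0=0$, $z^0=x^0$, and for $k=0,1,2,\dots$: $A_{k+1}=\frac{(1+q)A_k+2\big(1+\sqrt{(1+A_k)(1+qA_k)}\big)}{(1-q)^2}$, $\beta_k=\frac{A_k}{(1-q)A_{k+1}}$, $\delta_k=\sqrt{\frac{A_{k+1}}{1+qA_{k+1}}}$, $y^k=(1-\beta_k)z^k+\beta_k x^k$, $\bar z^{k+1}=(1-q\delta_k)z^k+q\delta_k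 y^k-\frac{\delta_k}{L}\nabla f(y^k)$, $z^{k+1}=\operatorname{Prox}^{\delta_k/L}_g(\bar z^{k+1})$, $x^{k+1}=y^k-\frac1L\nabla f(y^k)-\frac{1}{\delta_k}(\bar z^{k+1}-z^{k+1})$. *)

theory Defs
  imports "HOL-Analysis.Analysis" "HOL-Library.Extended_Real"
begin

definition ereal_convex :: "('a::real_vector \<Rightarrow> ereal) \<Rightarrow> bool" where
  "ereal_convex g \<longleftrightarrow>
     (\<forall>x y. \<forall>t::real. 0 < t \<and> t < 1 \<longrightarrow>
        g ((1 - t) *\<^sub>R x + t *\<^sub>R y) \<le> ereal (1 - t) * g x + ereal t * g y)"

definition ereal_proper :: "('a \<Rightarrow> ereal) \<Rightarrow> bool" where
  "ereal_proper g \<longleftrightarrow> (\<forall>x. g x \<noteq> -\<infinity>) \<and> (\<exists>x. g x \<noteq> \<infinity>)"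

definition ereal_lsc :: "('a::topological_space \<Rightarrow> ereal) \<Rightarrow> bool" where
  "ereal_lsc g \<longleftrightarrow> (\<forall>c::real. closed {x. g x \<le> ereal c})"

definition prox :: "real \<Rightarrow> ('a::real_normed_vector \<Rightarrow> ereal) \<Rightarrow> 'a \<Rightarrow> 'a" where
  "prox \<gamma> g x = (SOME z. \<forall>w. g z + ereal (norm (x - z)^2 / (2 * \<gamma>))
                                \<le> g w + ereal (norm (x - w)^2 / (2 * \<gamma>)))"

fun itemA :: "real \<Rightarrow> nat \<Rightarrow> real" where
  "itemA q 0 = 0"
| "itemA q (Suc k) =
     ((1 + q) * itemA q k + 2 * (1 + sqrt ((1 + itemA q k) * (1 + q * itemA q k)))) / (1 - q)^2"

definition itemBeta :: "real \<Rightarrow> nat \<Rightarrow> real" where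
  "itemBeta q k = itemA q k / ((1 - q) * itemA q (Suc k))"

definition itemDelta :: "real \<Rightarrow> nat \<Rightarrow> real" where
  "itemDelta q k = sqrt (itemA q (Suc k) / (1 + q * itemA q (Suc k)))"

fun proxitem :: "real \<Rightarrow> real \<Rightarrow> ('a::real_normed_vector \<Rightarrow> 'a) \<Rightarrow> ('a \<Rightarrow> ereal) \<Rightarrow> 'a
                  \<Rightarrow> nat \<Rightarrow> 'a \<times> 'a" where
  "proxitem \<mu> L df g x0 0 = (x0, x0)"
| "proxitem \<mu> L df g x0 (Suc k) =
     (let q = \<mu> / L; (x, z) = proxitem \<mu> L df g x0 k;
          \<beta> = itemBeta q k; \<delta> = itemDelta q k;
          y = (1 - \<beta>) *\<^sub>R z + \<beta> *\<^sub>R x;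
          zb = (1 - q * \<delta>) *\<^sub>R z + (q * \<delta>) *\<^sub>R y - (\<delta> / L) *\<^sub>R df y;
          z' = prox (\<delta> / L) g zb;
          x' = y - (1 / L) *\<^sub>R df y - (1 / \<delta>) *\<^sub>R (zb - z')
      in (x', z'))"

end

theory Submission
  imports Defs
begin

lemma le_eps:
  fixes a b C :: real
  assumes "\<And>t. 0 < t \<Longrightarrow> t < 1 \<Longrightarrow> a \<le> b + t * C"
  shows "a \<le> b"
proof (rule ccontr)
  assume nab: "\<not> a \<le> b"
  define t where "t = min (1/2) ((a-b)/(2*(\<bar>C\<bar>+1)))"
  have pos: "0 < (a-b)/(2*(\<bar>C\<bar>+1))" using nab by (simp add: field_simps)
  have t0: "0 < t" "t < 1" using pos by (auto simp: t_def)
  have "t * C \<le> t * (\<bar>C\<bar>+1)" using t0 by (intro mult_left_mono) auto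
  also have "t \<le> (a-b)/(2*(\<bar>C\<bar>+1))" by (simp add: t_def)
  hence "t * (\<bar>C\<bar>+1) \<le> (a-b)/2"
    by (simp add: field_simps)
  finally have "t * C \<le> (a-b)/2" .
  with assms[OF t0] have "a \<le> b + (a-b)/2" by linarith
  with nab show False by (simp add: field_simps)
qed

lemma comp_deriv:
  fixes f :: "'a::real_inner \<Rightarrow> real"
  assumes grad: "\<And>x. (f has_derivative (\<lambda>h. inner (df x) h)) (at x)"
  shows "((\<lambda>t. f (x + t *\<^sub>R d)) has_real_derivative inner (df (x + t *\<^sub>R d)) d) (at t)"
proof -
  have l: "((\<lambda>t. x + t *\<^sub>R d) has_derivative (\<lambda>h. h *\<^sub>R d)) (at t)"
    by (auto intro!: derivative_eq_intros)
  have "((\<lambda>t. f (x + t *\<^sub>R d)) has_derivative (\<lambda>h. inner (df (x + t *\<^sub>R d)) (h *\<^sub>R d))) (at t)"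
    using has_derivative_compose[OF l grad] by simp
  then show ?thesis
    by (rule has_derivative_imp_has_field_derivative) simp
qed

lemma descent:
  fixes f :: "'a::real_inner \<Rightarrow> real"
  assumes grad: "\<And>x. (f has_derivative (\<lambda>h. inner (df x) h)) (at x)"
    and lip: "L-lipschitz_on UNIV df"
  shows "f y \<le> f x + inner (df x) (y - x) + L/2 * (norm (y-x))^2"
    and "f x + inner (df x) (y - x) - L/2 * (norm (y-x))^2 \<le> f y"
proof -
  define d where "d = y - x"
  define c where "c = inner (df x) d"
  define nd where "nd = (norm d)^2"
  have bnd: "\<bar>inner (df (x + t *\<^sub>R d)) d - c\<bar> \<le> L * t * nd" if "0 \<le> t" for t
  proof -
    have "\<bar>inner (df (x + t *\<^sub>R d)) d - c\<bar> = \<bar>inner (df (x + t *\<^sub>R d) - df x) d\<bar>"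
      by (simp add: c_def inner_diff_left)
    also have "\<dots> \<le> norm (df (x + t *\<^sub>R d) - df x) * norm d" by (rule Cauchy_Schwarz_ineq2)
    also have "norm (df (x + t *\<^sub>R d) - df x) \<le> L * norm (t *\<^sub>R d)"
      using lipschitz_onD[OF lip, of "x + t *\<^sub>R d" x] by (simp add: dist_norm)
    hence "norm (df (x + t *\<^sub>R d) - df x) * norm d \<le> L * norm (t *\<^sub>R d) * norm d"
      by (simp add: mult_right_mono)
    also have "\<dots> = L * t * nd" using that by (simp add: nd_def power2_eq_square)
    finally show ?thesis .
  qed
  have D: "((\<lambda>t. f (x + t *\<^sub>R d)) has_real_derivative inner (df (x + t *\<^sub>R d)) d) (at t)" for t
    by (rule comp_deriv[OF grad])
  have D1: "((\<lambda>t. f (x + t *\<^sub>R d) - t * c - L/2 * t^2 * nd) has_real_derivative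
      (inner (df (x + t *\<^sub>R d)) d - c - L/2 * (2 * t) * nd)) (at t)" for t
    by (auto intro!: derivative_eq_intros D)
  have D2: "((\<lambda>t. f (x + t *\<^sub>R d) - t * c + L/2 * t^2 * nd) has_real_derivative
      (inner (df (x + t *\<^sub>R d)) d - c + L/2 * (2 * t) * nd)) (at t)" for t
    by (auto intro!: derivative_eq_intros D)
  have "(\<lambda>t. f (x + t *\<^sub>R d) - t * c - L/2 * t^2 * nd) 1 \<le> (\<lambda>t. f (x + t *\<^sub>R d) - t * c - L/2 * t^2 * nd) 0"
  proof (rule DERIV_nonpos_imp_nonincreasing[of 0 1])
    fix t :: real assume "0 \<le> t" "t \<le> 1"
    show "\<exists>y. ((\<lambda>t. f (x + t *\<^sub>R d) - t * c - L/2 * t^2 * nd) has_real_derivative y) (at t) \<and> y \<le> 0"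
      using D1[of t] bnd[OF \<open>0 \<le> t\<close>] by auto
  qed simp
  then show "f y \<le> f x + inner (df x) (y - x) + L/2 * (norm (y-x))^2"
    by (simp add: d_def c_def nd_def)
  have "(\<lambda>t. f (x + t *\<^sub>R d) - t * c + L/2 * t^2 * nd) 0 \<le> (\<lambda>t. f (x + t *\<^sub>R d) - t * c + L/2 * t^2 * nd) 1"
  proof (rule DERIV_nonneg_imp_nondecreasing[of 0 1])
    fix t :: real assume "0 \<le> t" "t \<le> 1"
    show "\<exists>y. ((\<lambda>t. f (x + t *\<^sub>R d) - t * c + L/2 * t^2 * nd) has_real_derivative y) (at t) \<and> y \<ge> 0"
      using D2[of t] bnd[OF \<open>0 \<le> t\<close>] by auto
  qed simp
  then show "f x + inner (df x) (y - x) - L/2 * (norm (y-x))^2 \<le> f y"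
    by (simp add: d_def c_def nd_def)
qed

lemma norm_sq_expand: "(norm (x + t *\<^sub>R d))^2 = (norm x)^2 + 2*t*inner x d + t^2*(norm d)^2"
  for x d :: "'a::real_inner"
  unfolding power2_norm_eq_inner by (simp add: inner_add_left inner_add_right inner_commute power2_eq_square algebra_simps)

lemma first_order_h:
  fixes f :: "'a::real_inner \<Rightarrow> real"
  assumes grad: "\<And>x. (f has_derivative (\<lambda>h. inner (df x) h)) (at x)"
    and lip: "L-lipschitz_on UNIV df"
    and conv: "convex_on UNIV (\<lambda>x. f x - \<mu> / 2 * (norm x)^2)"
  shows "f x - \<mu>/2*(norm x)^2 + inner (df x - \<mu> *\<^sub>R x) (y - x) \<le> f y - \<mu>/2*(norm y)^2"
proof -
  define d where "d = y - x"
  define h where "h = (\<lambda>x. f x - \<mu> / 2 * (norm x)^2)"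
  define C where "C = (L + \<mu>)/2 * (norm d)^2"
  have "h x + inner (df x - \<mu> *\<^sub>R x) d \<le> h y + t * C" if t: "0 < t" "t < 1" for t
  proof -
    have eq: "(1 - t) *\<^sub>R x + t *\<^sub>R y = x + t *\<^sub>R d" by (simp add: d_def algebra_simps)
    have cv: "h (x + t *\<^sub>R d) \<le> (1-t) * h x + t * h y"
      using convex_onD[OF conv, of t x y] t unfolding h_def eq by auto
    have ds: "f x + inner (df x) (t *\<^sub>R d) - L/2 * (norm (t *\<^sub>R d))^2 \<le> f (x + t *\<^sub>R d)"
      using descent(2)[OF grad lip, of x "x + t *\<^sub>R d"] by simp
    have ds': "f x + t * inner (df x) d - L/2 * (t^2 * (norm d)^2) \<le> f (x + t *\<^sub>R d)"
      using ds by (simp add: power_mult_distrib)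
    have key: "(f (x + t *\<^sub>R d) - \<mu>/2*((norm x)^2 + 2*t*inner x d + t^2*(norm d)^2))
       - (f x - \<mu>/2*(norm x)^2 + t*inner (df x - \<mu> *\<^sub>R x) d - t^2*((L+\<mu>)/2*(norm d)^2))
       = f (x + t *\<^sub>R d) - (f x + t * inner (df x) d - L/2 * (t^2 * (norm d)^2))"
      by (simp add: inner_diff_left algebra_simps)
    have "h (x + t *\<^sub>R d) \<ge> h x + t * inner (df x - \<mu> *\<^sub>R x) d - t^2 * C"
      using ds' key unfolding h_def C_def norm_sq_expand by linarith
    with cv have "t * (h x + inner (df x - \<mu> *\<^sub>R x) d) \<le> t * (h y + t * C)"
      by (simp add: algebra_simps power2_eq_square)
    thus ?thesis using t by simp
  qed
  hence "h x + inner (df x - \<mu> *\<^sub>R x) d \<le> h y" by (rule le_eps)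
  thus ?thesis by (simp add: h_def d_def)
qed

lemma interp:
  fixes f :: "'a::real_inner \<Rightarrow> real"
  assumes grad: "\<And>x. (f has_derivative (\<lambda>h. inner (df x) h)) (at x)"
    and lip: "L-lipschitz_on UNIV df"
    and conv: "convex_on UNIV (\<lambda>x. f x - \<mu> / 2 * (norm x)^2)"
    and mu: "0 < \<mu>" "\<mu> < L"
  shows "f b + inner (df b) (a - b) + \<mu>/2*(norm (a-b))^2
           + (norm (df a - df b - \<mu> *\<^sub>R (a - b)))^2/(2*(L-\<mu>)) \<le> f a"
proof -
  define h where "h = (\<lambda>x. f x - \<mu> / 2 * (norm x)^2)"
  define dh where "dh = (\<lambda>x. df x - \<mu> *\<^sub>R x)"
  define L' where "L' = L - \<mu>"
  have L'0: "L' > 0" using mu by (simp add: L'_def)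
  have fo: "h x + inner (dh x) (y - x) \<le> h y" for x y
    using first_order_h[OF grad lip conv] by (simp add: h_def dh_def)
  have up: "h y \<le> h x + inner (dh x) (y - x) + L'/2 * (norm (y - x))^2" for x y
  proof -
    have "f y \<le> f x + inner (df x) (y - x) + L/2 * (norm (y-x))^2" by (rule descent(1)[OF grad lip])
    moreover have "(norm y)^2 = (norm x)^2 + 2 * inner x (y - x) + (norm (y - x))^2"
      using norm_sq_expand[of x 1 "y - x"] by simp
    moreover have "(h x + inner (dh x) (y - x) + L'/2 * (norm (y - x))^2) - h y
       = (f x + inner (df x) (y - x) + L/2 * (norm (y-x))^2 - f y) + \<mu>/2 * ((norm y)^2 - ((norm x)^2 + 2 * inner x (y - x) + (norm (y - x))^2))"
      by (simp add: h_def dh_def L'_def inner_diff_left algebra_simps diff_divide_distrib)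
    ultimately show ?thesis by simp
  qed
  define u where "u = dh a - dh b"
  define zz where "zz = a - (1/L') *\<^sub>R u"
  have 1: "h b + inner (dh b) (zz - b) \<le> h zz" by (rule fo)
  have 2: "h zz \<le> h a + inner (dh a) (zz - a) + L'/2 * (norm (zz - a))^2" by (rule up)
  have e1: "inner (dh b) (zz - b) = inner (dh b) (a - b) - inner (dh b) u / L'"
    by (simp add: zz_def inner_diff_right algebra_simps)
  have e2: "inner (dh a) (zz - a) = - inner (dh a) u / L'"
    by (simp add: zz_def)
  have e3: "L'/2 * (norm (zz - a))^2 = (norm u)^2 / (2 * L')"
    using L'0 by (simp add: zz_def power2_eq_square field_simps)
  have e4: "inner (dh a) u - inner (dh b) u = (norm u)^2"
    by (simp add: u_def power2_norm_eq_inner inner_diff_left)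
  from 1 2 e1 e2 e3 have "h b + inner (dh b) (a - b) - inner (dh b) u / L' \<le> h a - inner (dh a) u / L' + (norm u)^2 / (2 * L')"
    by linarith
  hence "h b + inner (dh b) (a - b) + (inner (dh a) u - inner (dh b) u) / L' - (norm u)^2 / (2 * L') \<le> h a"
    by (simp add: diff_divide_distrib)
  moreover have "(inner (dh a) u - inner (dh b) u) / L' - (norm u)^2 / (2 * L') = (norm u)^2 / (2 * L')"
    unfolding e4 using L'0 by (simp add: field_simps)
  ultimately have main: "h b + inner (dh b) (a - b) + (norm u)^2 / (2 * L') \<le> h a"
    by linarith
  have na: "(norm a)^2 = (norm b)^2 + 2 * inner b (a - b) + (norm (a - b))^2"
    using norm_sq_expand[of b 1 "a - b"] by simp
  have uu: "u = df a - df b - \<mu> *\<^sub>R (a - b)" by (simp add: u_def dh_def algebra_simps)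
  have fin: "f a - (f b + inner (df b) (a - b) + \<mu>/2*(norm (a-b))^2 + (norm u)^2/(2*(L-\<mu>)))
     = h a - (h b + inner (dh b) (a-b) + (norm u)^2/(2*L')) + \<mu>/2*((norm a)^2 - ((norm b)^2 + 2*inner b (a-b) + (norm (a-b))^2))"
    by (simp add: h_def dh_def L'_def inner_diff_left algebra_simps diff_divide_distrib)
  have z: "\<mu>/2*((norm a)^2 - ((norm b)^2 + 2*inner b (a-b) + (norm (a-b))^2)) = 0" using na by simp
  show ?thesis unfolding uu[symmetric] using main fin z by linarith
qed

lemma fin_ereal: "x \<noteq> \<infinity> \<Longrightarrow> x \<noteq> -\<infinity> \<Longrightarrow> x = ereal (real_of_ereal x)"
  by (cases x) auto

lemma ereal_convex_real:
  fixes g :: "'a::real_vector \<Rightarrow> ereal"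
  assumes conv: "ereal_convex g" and ninf: "\<And>x. g x \<noteq> -\<infinity>"
    and a: "g a = ereal ga" and b: "g b = ereal gb" and t: "0 < t" "t < 1"
  shows "g ((1 - t) *\<^sub>R a + t *\<^sub>R b) = ereal (real_of_ereal (g ((1 - t) *\<^sub>R a + t *\<^sub>R b)))"
    and "real_of_ereal (g ((1 - t) *\<^sub>R a + t *\<^sub>R b)) \<le> (1-t) * ga + t * gb"
proof -
  have "g ((1 - t) *\<^sub>R a + t *\<^sub>R b) \<le> ereal (1 - t) * g a + ereal t * g b"
    using conv t unfolding ereal_convex_def by blast
  hence le: "g ((1 - t) *\<^sub>R a + t *\<^sub>R b) \<le> ereal ((1-t) * ga + t * gb)"
    by (simp add: a b)
  hence ni: "g ((1 - t) *\<^sub>R a + t *\<^sub>R b) \<noteq> \<infinity>" by auto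
  show e: "g ((1 - t) *\<^sub>R a + t *\<^sub>R b) = ereal (real_of_ereal (g ((1 - t) *\<^sub>R a + t *\<^sub>R b)))"
    using fin_ereal[OF ni ninf] .
  show "real_of_ereal (g ((1 - t) *\<^sub>R a + t *\<^sub>R b)) \<le> (1-t) * ga + t * gb"
    using le by (subst (asm) e) simp
qed

lemma norm_diff_scale: "(norm (c - t *\<^sub>R e))^2 = (norm c)^2 - 2*t*inner c e + t^2*(norm e)^2"
  for c e :: "'a::real_inner"
  unfolding power2_norm_eq_inner
  by (simp add: inner_diff_left inner_diff_right inner_commute power2_eq_square algebra_simps)

lemma xstar_props:
  fixes f :: "'a::real_inner \<Rightarrow> real" and g :: "'a \<Rightarrow> ereal"
  assumes grad: "\<And>x. (f has_derivative (\<lambda>h. inner (df x) h)) (at x)"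
    and lip: "L-lipschitz_on UNIV df"
    and g_convex: "ereal_convex g" and g_proper: "ereal_proper g"
    and xstar_min: "\<And>y. ereal (f xstar) + g xstar \<le> ereal (f y) + g y"
  shows "g xstar = ereal (real_of_ereal (g xstar))"
    and "\<And>w. g w \<noteq> \<infinity> \<Longrightarrow> real_of_ereal (g xstar) - inner (df xstar) (w - xstar) \<le> real_of_ereal (g w)"
    and "\<And>w. ereal (real_of_ereal (g xstar) - inner (df xstar) (w - xstar)) \<le> g w"
proof -
  have ninf: "\<And>x. g x \<noteq> -\<infinity>" using g_proper by (auto simp: ereal_proper_def)
  obtain y where y: "g y \<noteq> \<infinity>" using g_proper by (auto simp: ereal_proper_def)
  have "g xstar \<noteq> \<infinity>"
  proof
    assume "g xstar = \<infinity>"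
    with xstar_min[of y] have "ereal (f y) + g y = \<infinity>" by simp
    with y ninf[of y] show False by (cases "g y") auto
  qed
  thus gs: "g xstar = ereal (real_of_ereal (g xstar))" using fin_ereal ninf by blast
  define gs where "gs = real_of_ereal (g xstar)"
  show main: "real_of_ereal (g xstar) - inner (df xstar) (w - xstar) \<le> real_of_ereal (g w)"
    if w: "g w \<noteq> \<infinity>" for w
  proof -
    define gw where "gw = real_of_ereal (g w)"
    have gw: "g w = ereal gw" using fin_ereal[OF w ninf] by (simp add: gw_def)
    define d where "d = w - xstar"
    have "gs \<le> inner (df xstar) d + gw + t * (L/2 * (norm d)^2)" if t: "0 < t" "t < 1" for t
    proof -
      let ?wt = "(1 - t) *\<^sub>R xstar + t *\<^sub>R w"
      have wt: "?wt = xstar + t *\<^sub>R d" by (simp add: d_def algebra_simps)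
      have e1: "g ?wt = ereal (real_of_ereal (g ?wt))"
        and e2: "real_of_ereal (g ?wt) \<le> (1-t) * gs + t * gw"
        using ereal_convex_real[OF g_convex ninf gs[folded gs_def] gw t] by auto
      have "ereal (f xstar) + g xstar \<le> ereal (f ?wt) + g ?wt" by (rule xstar_min)
      hence m: "f xstar + gs \<le> f ?wt + real_of_ereal (g ?wt)"
        by (subst (asm) e1, subst (asm) gs) (simp add: gs_def)
      have ds: "f ?wt \<le> f xstar + inner (df xstar) (t *\<^sub>R d) + L/2 * (norm (t *\<^sub>R d))^2"
        using descent(1)[OF grad lip, of "?wt" xstar] unfolding wt by simp
      hence ds': "f ?wt \<le> f xstar + t * inner (df xstar) d + t * (t * (L/2 * (norm d)^2))"
        by (simp add: power_mult_distrib power2_eq_square algebra_simps)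
      from m e2 ds' have "t * gs \<le> t * (inner (df xstar) d + gw + t * (L/2 * (norm d)^2))"
        by (simp add: algebra_simps)
      thus ?thesis using t by simp
    qed
    hence "gs \<le> inner (df xstar) d + gw" by (rule le_eps)
    thus ?thesis by (simp add: gs_def gw_def d_def)
  qed
  show "ereal (real_of_ereal (g xstar) - inner (df xstar) (w - xstar)) \<le> g w" for w
  proof (cases "g w = \<infinity>")
    case True thus ?thesis by simp
  next
    case False
    thus ?thesis using main[OF False] fin_ereal[OF False ninf] by (metis ereal_less_eq(3))
  qed
qed

lemma parallelogram_mid:
  fixes x a b :: "'a::real_inner"
  shows "(norm (x - ((1 - 1/2) *\<^sub>R a + (1/2) *\<^sub>R b)))^2
         = (norm (x - a))^2/2 + (norm (x - b))^2/2 - (norm (a - b))^2/4"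
  unfolding power2_norm_eq_inner
  apply (simp add: inner_diff_left inner_diff_right inner_add_left inner_add_right inner_commute algebra_simps)
  by (simp add: field_simps)

lemma prox_exists:
  fixes g :: "'a::{real_inner,complete_space} \<Rightarrow> ereal"
  assumes conv: "ereal_convex g" and ninf: "\<And>x. g x \<noteq> -\<infinity>" and lsc: "ereal_lsc g"
    and dom: "g x1 \<noteq> \<infinity>" and minor: "\<And>w. ereal (c0 + inner p w) \<le> g w" and gam: "0 < \<gamma>"
  shows "\<exists>z. \<forall>w. g z + ereal ((norm (x - z))^2/(2*\<gamma>)) \<le> g w + ereal ((norm (x - w))^2/(2*\<gamma>))"
proof -
  define gr where "gr = (\<lambda>w. real_of_ereal (g w))"
  define D where "D = {w. g w \<noteq> \<infinity>}"
  have gD: "w \<in> D \<Longrightarrow> g w = ereal (gr w)" for w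
    using fin_ereal[OF _ ninf] by (simp add: D_def gr_def)
  define \<phi> where "\<phi> = (\<lambda>w. gr w + (norm (x - w))^2/(2*\<gamma>))"
  define M0 where "M0 = c0 + inner p x - \<gamma>/2 * (norm p)^2"
  have lb: "M0 \<le> \<phi> w" if w: "w \<in> D" for w
  proof -
    have "ereal (c0 + inner p w) \<le> ereal (gr w)" using minor[of w] gD[OF w] by simp
    hence g1: "c0 + inner p w \<le> gr w" by simp
    have "inner p (w - x) \<ge> - (norm p * norm (w - x))"
      using Cauchy_Schwarz_ineq2[of p "w - x"] by linarith
    hence g2: "inner p w \<ge> inner p x - norm p * norm (w - x)" by (simp add: inner_diff_right)
    have sq: "0 \<le> (norm (w - x) - \<gamma> * norm p)^2/(2*\<gamma>)" using gam by simp
    have "(norm (w - x) - \<gamma> * norm p)^2/(2*\<gamma>) = (norm (w - x))^2/(2*\<gamma>) - norm p * norm (w - x) + \<gamma>/2 * (norm p)^2"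
      using gam by (simp add: power2_eq_square field_simps)
    with sq have g3: "norm p * norm (w - x) - \<gamma>/2 * (norm p)^2 \<le> (norm (x - w))^2/(2*\<gamma>)"
      by (simp add: norm_minus_commute)
    show ?thesis using g1 g2 g3 by (simp add: \<phi>_def M0_def)
  qed
  have DnE: "D \<noteq> {}" using dom by (auto simp: D_def)
  have bdd: "bdd_below (\<phi> ` D)" using lb by (auto simp: bdd_below_def)
  define m where "m = Inf (\<phi> ` D)"
  have mle: "m \<le> \<phi> w" if "w \<in> D" for w
    unfolding m_def using bdd that by (simp add: cInf_lower)
  have "\<exists>w\<in>D. \<phi> w < m + 1/real (Suc n)" for n
  proof -
    have "Inf (\<phi> ` D) < m + 1/real (Suc n)" by (simp add: m_def)
    from cInf_lessD[OF _ this] DnE show ?thesis by auto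
  qed
  then obtain w where wD: "\<And>n. w n \<in> D" and wm: "\<And>n. \<phi> (w n) < m + 1/real (Suc n)"
    by metis
  have midp: "(norm (a - b))^2 \<le> 4*\<gamma>*(\<phi> a + \<phi> b - 2*m)" if a: "a \<in> D" and b: "b \<in> D" for a b
  proof -
    let ?c = "(1 - 1/2) *\<^sub>R a + (1/2::real) *\<^sub>R b"
    have e1: "g ?c = ereal (real_of_ereal (g ?c))"
      and e2: "real_of_ereal (g ?c) \<le> (1 - 1/2) * gr a + (1/2) * gr b"
      using ereal_convex_real[OF conv ninf gD[OF a] gD[OF b], of "1/2"] by auto
    have cD: "?c \<in> D" using e1 by (auto simp: D_def)
    have "m \<le> \<phi> ?c" by (rule mle[OF cD])
    also have "\<phi> ?c \<le> (gr a + gr b)/2 + ((norm (x - a))^2/2 + (norm (x - b))^2/2 - (norm (a - b))^2/4)/(2*\<gamma>)"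
      unfolding \<phi>_def parallelogram_mid using e2 gam by (simp add: gr_def divide_right_mono)
    finally have mm: "m \<le> (gr a + gr b)/2 + ((norm (x - a))^2/2 + (norm (x - b))^2/2 - (norm (a - b))^2/4)/(2*\<gamma>)" .
    have "4*\<gamma>*m \<le> 4*\<gamma>*((gr a + gr b)/2 + ((norm (x - a))^2/2 + (norm (x - b))^2/2 - (norm (a - b))^2/4)/(2*\<gamma>))"
      using mm gam by (intro mult_left_mono) auto
    also have "\<dots> = 2*\<gamma>*(gr a + gr b) + (norm (x - a))^2 + (norm (x - b))^2 - (norm (a - b))^2/2"
      using gam by (simp add: field_simps)
    finally have m4: "4*\<gamma>*m \<le> 2*\<gamma>*(gr a + gr b) + (norm (x - a))^2 + (norm (x - b))^2 - (norm (a - b))^2/2" .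
    have m4': "4*(\<gamma>*m) \<le> 2*(\<gamma>*gr a) + 2*(\<gamma>*gr b) + (norm (x - a))^2 + (norm (x - b))^2 - (norm (a - b))^2/2"
      using m4 by (simp add: algebra_simps)
    have pa: "4*(\<gamma>*\<phi> a) = 4*(\<gamma>*gr a) + 2*(norm (x - a))^2" using gam by (simp add: \<phi>_def field_simps)
    have pb: "4*(\<gamma>*\<phi> b) = 4*(\<gamma>*gr b) + 2*(norm (x - b))^2" using gam by (simp add: \<phi>_def field_simps)
    have "(norm (a - b))^2 \<le> 4*(\<gamma>*\<phi> a) + 4*(\<gamma>*\<phi> b) - 8*(\<gamma>*m)" using m4' pa pb by linarith
    thus ?thesis by (simp add: algebra_simps)
  qed
  have wbound: "(norm (w i - w j))^2 \<le> 4*\<gamma>*(1/real (Suc i) + 1/real (Suc j))" for i j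
  proof -
    have "(norm (w i - w j))^2 \<le> 4*\<gamma>*(\<phi> (w i) + \<phi> (w j) - 2*m)" by (rule midp[OF wD wD])
    also have "\<dots> \<le> 4*\<gamma>*(1/real (Suc i) + 1/real (Suc j))"
      using wm[of i] wm[of j] gam by (intro mult_left_mono) auto
    finally show ?thesis .
  qed
  have "Cauchy w"
  proof (rule CauchyI)
    fix e :: real assume e: "0 < e"
    obtain M :: nat where M: "8*\<gamma>/e^2 < real M" using reals_Archimedean2 by blast
    show "\<exists>M. \<forall>i\<ge>M. \<forall>j\<ge>M. norm (w i - w j) < e"
    proof (intro exI allI impI)
      fix i j assume i: "M \<le> i" and j: "j \<ge> M"
      have "1/real (Suc i) \<le> 1/real (Suc M)" using i by (simp add: frac_le)
      moreover have "1/real (Suc j) \<le> 1/real (Suc M)" using j by (simp add: frac_le)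
      ultimately have "1/real (Suc i) + 1/real (Suc j) \<le> 2/real (Suc M)" by simp
      hence "4*\<gamma>*(1/real (Suc i) + 1/real (Suc j)) \<le> 4*\<gamma>*(2/real (Suc M))"
        using gam by (intro mult_left_mono) auto
      hence "(norm (w i - w j))^2 \<le> 4*\<gamma>*(2/real (Suc M))"
        using wbound[of i j] by linarith
      also have "4*\<gamma>*(2/real (Suc M)) < e^2"
      proof -
        have "8*\<gamma> < e^2 * real M" using M e by (simp add: field_simps)
        also have "\<dots> \<le> e^2 * real (Suc M)" using e by simp
        finally show ?thesis by (simp add: field_simps)
      qed
      finally show "norm (w i - w j) < e" using e by (simp add: power_less_imp_less_base)
    qed
  qed
  then obtain ws where lim: "w \<longlonglongrightarrow> ws" using Cauchy_convergent_iff convergent_def by blast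
  define c where "c = m - (norm (x - ws))^2/(2*\<gamma>)"
  have cle: "g ws \<le> ereal (c + \<epsilon>)" if eps: "0 < \<epsilon>" for \<epsilon>
  proof -
    define \<rho> where "\<rho> = (\<lambda>n. m + 1/real (Suc n) - (norm (x - w n))^2/(2*\<gamma>))"
    have "(\<lambda>n. 1/real (Suc n)) \<longlonglongrightarrow> 0" using LIMSEQ_inverse_real_of_nat by (simp add: inverse_eq_divide)
    hence "\<rho> \<longlonglongrightarrow> m + 0 - (norm (x - ws))^2/(2*\<gamma>)"
      unfolding \<rho>_def using gam by (intro tendsto_intros lim) auto
    hence "\<rho> \<longlonglongrightarrow> c" by (simp add: c_def)
    hence ev: "eventually (\<lambda>n. \<rho> n < c + \<epsilon>) sequentially" using eps by (intro order_tendstoD) auto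
    have "eventually (\<lambda>n. w n \<in> {y. g y \<le> ereal (c + \<epsilon>)}) sequentially"
    proof (rule eventually_mono[OF ev])
      fix n assume "\<rho> n < c + \<epsilon>"
      moreover have "gr (w n) < \<rho> n" using wm[of n] by (simp add: \<rho>_def \<phi>_def)
      ultimately show "w n \<in> {y. g y \<le> ereal (c + \<epsilon>)}" using gD[OF wD[of n]] by simp
    qed
    moreover have "closed {y. g y \<le> ereal (c + \<epsilon>)}" using lsc by (simp add: ereal_lsc_def)
    ultimately have "ws \<in> {y. g y \<le> ereal (c + \<epsilon>)}"
      using Lim_in_closed_set[OF _ _ _ lim] trivial_limit_sequentially by blast
    thus ?thesis by simp
  qed
  have wsD: "ws \<in> D" using cle[of 1] by (auto simp: D_def)
  have "gr ws \<le> c + t * 1" if "0 < t" "t < 1" for t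
    using cle[of t] that gD[OF wsD] by simp
  hence grc: "gr ws \<le> c" by (rule le_eps)
  show ?thesis
  proof (intro exI allI)
    fix v
    show "g ws + ereal ((norm (x - ws))^2/(2*\<gamma>)) \<le> g v + ereal ((norm (x - v))^2/(2*\<gamma>))"
    proof (cases "v \<in> D")
      case False
      hence "g v = \<infinity>" by (simp add: D_def)
      thus ?thesis by simp
    next
      case True
      have "gr ws + (norm (x - ws))^2/(2*\<gamma>) \<le> \<phi> v" using grc mle[OF True] by (simp add: c_def)
      thus ?thesis using gD[OF wsD] gD[OF True] by (simp add: \<phi>_def)
    qed
  qed
qed

lemma prox_props:
  fixes g :: "'a::{real_inner,complete_space} \<Rightarrow> ereal"
  assumes conv: "ereal_convex g" and ninf: "\<And>x. g x \<noteq> -\<infinity>" and lsc: "ereal_lsc g"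
    and dom: "g x1 \<noteq> \<infinity>" and minor: "\<And>w. ereal (c0 + inner p w) \<le> g w" and gam: "0 < \<gamma>"
  shows "g (prox \<gamma> g x) \<noteq> \<infinity>"
    and "\<And>w. g w \<noteq> \<infinity> \<Longrightarrow> real_of_ereal (g (prox \<gamma> g x))
            + inner ((1/\<gamma>) *\<^sub>R (x - prox \<gamma> g x)) (w - prox \<gamma> g x) \<le> real_of_ereal (g w)"
proof -
  define z where "z = prox \<gamma> g x"
  have H: "\<forall>w. g z + ereal ((norm (x - z))^2/(2*\<gamma>)) \<le> g w + ereal ((norm (x - w))^2/(2*\<gamma>))"
    unfolding z_def prox_def
    by (rule someI_ex[OF prox_exists[OF conv ninf lsc dom minor gam]])
  show zfin: "g (prox \<gamma> g x) \<noteq> \<infinity>"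
  proof
    assume "g (prox \<gamma> g x) = \<infinity>"
    hence "g z = \<infinity>" by (simp add: z_def)
    hence "\<infinity> \<le> g x1 + ereal ((norm (x - x1))^2/(2*\<gamma>))" using H[rule_format, of x1] by simp
    with dom ninf[of x1] show False by (cases "g x1") auto
  qed
  hence zf: "g z = ereal (real_of_ereal (g z))" using fin_ereal ninf by (simp add: z_def)
  define gz where "gz = real_of_ereal (g z)"
  show "real_of_ereal (g (prox \<gamma> g x)) + inner ((1/\<gamma>) *\<^sub>R (x - prox \<gamma> g x)) (w - prox \<gamma> g x) \<le> real_of_ereal (g w)"
    if w: "g w \<noteq> \<infinity>" for w
  proof -
    define gw where "gw = real_of_ereal (g w)"
    have gwf: "g w = ereal gw" using fin_ereal[OF w ninf] by (simp add: gw_def)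
    define e where "e = w - z"
    define c where "c = x - z"
    have "gz + inner c e / \<gamma> \<le> gw + t * ((norm e)^2/(2*\<gamma>))" if t: "0 < t" "t < 1" for t
    proof -
      let ?wt = "(1 - t) *\<^sub>R z + t *\<^sub>R w"
      have wt: "x - ?wt = c - t *\<^sub>R e" by (simp add: c_def e_def algebra_simps)
      have e1: "g ?wt = ereal (real_of_ereal (g ?wt))"
        and e2: "real_of_ereal (g ?wt) \<le> (1-t) * gz + t * gw"
        using ereal_convex_real[OF conv ninf zf[folded gz_def] gwf t] by auto
      have "g z + ereal ((norm (x - z))^2/(2*\<gamma>)) \<le> g ?wt + ereal ((norm (x - ?wt))^2/(2*\<gamma>))"
        using H by blast
      hence m: "gz + (norm c)^2/(2*\<gamma>) \<le> real_of_ereal (g ?wt) + (norm (c - t *\<^sub>R e))^2/(2*\<gamma>)"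
        unfolding wt by (subst (asm) e1, subst (asm) zf) (simp add: gz_def c_def)
      have n: "(norm (c - t *\<^sub>R e))^2/(2*\<gamma>) = (norm c)^2/(2*\<gamma>) - t * (inner c e / \<gamma>) + t * (t * ((norm e)^2/(2*\<gamma>)))"
        unfolding norm_diff_scale using gam by (simp add: field_simps power2_eq_square)
      from m e2 n have "t * (gz + inner c e / \<gamma>) \<le> t * (gw + t * ((norm e)^2/(2*\<gamma>)))"
        by (simp add: algebra_simps)
      thus ?thesis using t by simp
    qed
    hence "gz + inner c e / \<gamma> \<le> gw" by (rule le_eps)
    thus ?thesis by (simp add: gz_def gw_def c_def e_def z_def)
  qed
qed

lemma itemA_basic:
  fixes q :: real assumes q: "0 < q" "q < 1"
  shows "0 \<le> itemA q k \<and> itemA q k \<le> itemA q (Suc k) \<and> 0 < itemA q (Suc k)"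
proof (induction k)
  case 0
  have "0 < (2 * (1 + sqrt ((1 + 0) * (1 + q * 0)))) / (1 - q)^2" using q by simp
  thus ?case by simp
next
  case (Suc k)
  define A where "A = itemA q (Suc k)"
  have A0: "0 \<le> A" using Suc by (simp add: A_def)
  have S0: "0 \<le> sqrt ((1 + A) * (1 + q * A))" using A0 q by simp
  have den: "0 < (1 - q)^2" "(1-q)^2 \<le> 1" using q by (auto simp: power2_eq_square mult_le_one)
  have num: "A \<le> (1 + q) * A + 2 * (1 + sqrt ((1 + A) * (1 + q * A)))" using A0 S0 q by (simp add: algebra_simps)
  have "A \<le> (1 + q) * A + 2 * (1 + sqrt ((1 + A) * (1 + q * A)))" by (rule num)
  also have "\<dots> \<le> ((1 + q) * A + 2 * (1 + sqrt ((1 + A) * (1 + q * A)))) / (1 - q)^2"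
  proof -
    define N where "N = (1 + q) * A + 2 * (1 + sqrt ((1 + A) * (1 + q * A)))"
    have N0: "0 \<le> N" using A0 S0 q by (simp add: N_def)
    have "N * (1-q)^2 \<le> N * 1" by (rule mult_left_mono[OF den(2) N0])
    hence "N \<le> N / (1-q)^2" using den(1) by (simp add: le_divide_eq)
    thus ?thesis by (simp add: N_def)
  qed
  finally have le: "A \<le> itemA q (Suc (Suc k))" by (simp add: A_def)
  have "0 \<le> (1+q)*A" using A0 q by simp
  hence pos: "0 < (1 + q) * A + 2 * (1 + sqrt ((1 + A) * (1 + q * A)))" using S0 by (smt (verit))
  have "0 < ((1 + q) * A + 2 * (1 + sqrt ((1 + A) * (1 + q * A)))) / (1 - q)^2"
    by (rule divide_pos_pos[OF pos den(1)])
  hence "0 < itemA q (Suc (Suc k))" by (simp add: A_def)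
  with le A0 show ?case by (simp add: A_def)
qed

lemma itemA_root:
  fixes q :: real assumes q: "0 < q" "q < 1"
  shows "(1+q) * itemA q (Suc k) - itemA q k = 2 * sqrt (itemA q (Suc k) * (1 + q * itemA q (Suc k)))"
proof -
  define A where "A = itemA q k"
  define B where "B = itemA q (Suc k)"
  have A0: "0 \<le> A" and AB: "A \<le> B" and B0: "0 < B" using itemA_basic[OF q, of k] by (auto simp: A_def B_def)
  define S where "S = sqrt ((1 + A) * (1 + q * A))"
  have S2: "S^2 = (1 + A) * (1 + q * A)" unfolding S_def using A0 q by simp
  have q1: "(1-q)^2 \<noteq> 0" using q by simp
  have hB: "(1-q)^2 * B = (1+q)*A + 2 + 2*S"
    unfolding B_def S_def A_def using q1 by simp
  have poly: "(1-q)^2 * (((1+q)*B - A)^2 - 4*(B*(1+q*B))) = ((1-q)^2*B - (1+q)*A - 2)^2 - 4*((1+A)*(1+q*A))"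
    by algebra
  have "((1-q)^2*B - (1+q)*A - 2)^2 = 4 * S^2" unfolding hB by (simp add: power2_eq_square algebra_simps)
  hence "(1-q)^2 * (((1+q)*B - A)^2 - 4*(B*(1+q*B))) = 0" unfolding poly S2 by simp
  hence rel: "((1+q)*B - A)^2 = 4*(B*(1+q*B))" using q1 by simp
  have nn: "0 \<le> (1+q)*B - A" using AB q B0 by (simp add: algebra_simps) (smt (verit) mult_nonneg_nonneg)
  have "sqrt (4*(B*(1+q*B))) = (1+q)*B - A" using rel nn by (simp add: real_sqrt_unique)
  moreover have "sqrt (4*(B*(1+q*B))) = 2 * sqrt (B*(1+q*B))" by (simp add: real_sqrt_mult)
  ultimately show ?thesis by (simp add: A_def B_def)
qed

lemma itemDelta_props:
  fixes q :: real assumes q: "0 < q" "q < 1"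
  shows "0 < itemDelta q k"
    and "(itemDelta q k)^2 * (1 + q * itemA q (Suc k)) = itemA q (Suc k)"
    and "2 * itemDelta q k * (1 + q * itemA q (Suc k)) = (1+q) * itemA q (Suc k) - itemA q k"
    and "itemDelta q k * sqrt (itemA q (Suc k) * (1 + q * itemA q (Suc k))) = itemA q (Suc k)"
    and "itemBeta q k * (1 - q) * itemA q (Suc k) = itemA q k"
proof -
  define B where "B = itemA q (Suc k)"
  have B0: "0 < B" using itemA_basic[OF q, of k] by (simp add: B_def)
  have qB: "0 < 1 + q*B" using B0 q by (simp add: add_pos_nonneg)
  define d where "d = itemDelta q k"
  have dd: "d = sqrt (B / (1 + q*B))" by (simp add: d_def B_def itemDelta_def)
  show "0 < itemDelta q k" unfolding itemDelta_def B_def[symmetric] using B0 qB by simp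
  have d2: "d^2 = B / (1 + q*B)" unfolding dd using B0 qB by simp
  have d2m: "d^2 * (1 + q*B) = B" using d2 qB by (simp add: field_simps)
  show "(itemDelta q k)^2 * (1 + q * itemA q (Suc k)) = itemA q (Suc k)"
    unfolding d_def[symmetric] B_def[symmetric] by (rule d2m)
  have "(d * (1 + q*B))^2 = (d^2 * (1 + q*B)) * (1 + q*B)" by (simp add: power2_eq_square)
  also have "\<dots> = B * (1 + q*B)" by (simp add: d2m)
  finally have "(d * (1 + q*B))^2 = B * (1 + q*B)" .
  moreover have "0 \<le> d * (1 + q*B)" using qB B0 unfolding dd by (intro mult_nonneg_nonneg) auto
  ultimately have ds: "sqrt (B * (1 + q*B)) = d * (1 + q*B)" by (simp add: real_sqrt_unique)
  show "2 * itemDelta q k * (1 + q * itemA q (Suc k)) = (1+q) * itemA q (Suc k) - itemA q k"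
    using itemA_root[OF q, of k] ds unfolding d_def[symmetric] B_def[symmetric] by simp
  show "itemDelta q k * sqrt (itemA q (Suc k) * (1 + q * itemA q (Suc k))) = itemA q (Suc k)"
    unfolding d_def[symmetric] B_def[symmetric] ds by (metis d2m mult.assoc power2_eq_square)
  show "itemBeta q k * (1 - q) * itemA q (Suc k) = itemA q k"
    unfolding itemBeta_def B_def[symmetric] using B0 q by simp
qed

definition Phi2 :: "real \<Rightarrow> real \<Rightarrow> real \<Rightarrow> real \<Rightarrow> real \<Rightarrow> 'a::real_inner \<Rightarrow> 'a \<Rightarrow> 'a \<Rightarrow> 'a \<Rightarrow> real \<Rightarrow> real \<Rightarrow> real" where
  "Phi2 q r A a b z ym sm v fm gz = 2*(1+q*A)*inner z z + (1-q)*A*(2*fm - q*inner ym ym - 2*r*inner (sm - q *\<^sub>R ym) (sm - q *\<^sub>R ym)) + 2*a*inner v z - 2*b*gz + A*inner v v"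

lemma stepc_z_z: fixes q A B d \<beta> r bp :: real
  assumes R1: "d^2*(1+q*B) - B = 0" and R2: "2*d*(1+q*B) - (1+q)*B + A = 0" and R3: "\<beta>*(1-q)*B - A = 0"
    and R4: "2*r*(1-q) - 1 = 0" and R5: "bp*d - A = 0"
  shows "(- 4*q*d*\<beta> + 4*q*B*\<beta> - 2*q*B*\<beta>^2 - 2*q*A + 2*q^2*d^2*\<beta>^2 + 2*q^2*B - 4*q^2*B*r - 4*q^2*B*\<beta> + 8*q^2*B*\<beta>*r + 2*q^2*B*\<beta>^2 - 4*q^2*B*\<beta>^2*r - 4*q^2*B*d*\<beta> + 4*q^3*B*r - 8*q^3*B*\<beta>*r + 4*q^3*B*\<beta>^2*r + 2*q^3*B*d^2*\<beta>^2) = 0" using assms by algebra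

lemma stepc_z_ym: fixes q A B d \<beta> r bp :: real
  assumes R1: "d^2*(1+q*B) - B = 0" and R2: "2*d*(1+q*B) - (1+q)*B + A = 0" and R3: "\<beta>*(1-q)*B - A = 0"
    and R4: "2*r*(1-q) - 1 = 0" and R5: "bp*d - A = 0"
  shows "(4*q*d*\<beta> - 4*q*B*\<beta> + 4*q*B*\<beta>^2 + 2*q*A - 2*q*A*\<beta> - 4*q^2*d^2*\<beta>^2 + 4*q^2*B*\<beta> - 8*q^2*B*\<beta>*r - 4*q^2*B*\<beta>^2 + 8*q^2*B*\<beta>^2*r + 4*q^2*B*d*\<beta> - 2*q^2*A + 4*q^2*A*r + 2*q^2*A*\<beta> - 4*q^2*A*\<beta>*r + 8*q^3*B*\<beta>*r - 8*q^3*B*\<beta>^2*r - 4*q^3*B*d^2*\<beta>^2 - 4*q^3*A*r + 4*q^3*A*\<beta>*r) = 0" using assms by algebra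

lemma stepc_z_sm: fixes q A B d \<beta> r bp :: real
  assumes R1: "d^2*(1+q*B) - B = 0" and R2: "2*d*(1+q*B) - (1+q)*B + A = 0" and R3: "\<beta>*(1-q)*B - A = 0"
    and R4: "2*r*(1-q) - 1 = 0" and R5: "bp*d - A = 0"
  shows "(- 4*q*d*\<beta> + 4*q*B*\<beta> - 4*q*B*\<beta>^2 - 4*q*A*r + 4*q*A*\<beta>*r + 4*q^2*d^2*\<beta>^2 - 4*q^2*B*\<beta> + 8*q^2*B*\<beta>*r + 4*q^2*B*\<beta>^2 - 8*q^2*B*\<beta>^2*r - 4*q^2*B*d*\<beta> + 4*q^2*A*r - 4*q^2*A*\<beta>*r - 8*q^3*B*\<beta>*r + 8*q^3*B*\<beta>^2*r + 4*q^3*B*d^2*\<beta>^2) = 0" using assms by algebra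

lemma stepc_z_v: fixes q A B d \<beta> r bp :: real
  assumes R1: "d^2*(1+q*B) - B = 0" and R2: "2*d*(1+q*B) - (1+q)*B + A = 0" and R3: "\<beta>*(1-q)*B - A = 0"
    and R4: "2*r*(1-q) - 1 = 0" and R5: "bp*d - A = 0"
  shows "(- 4*q*d*\<beta> + 2*q*d*\<beta>*bp + 4*q*B*\<beta> - 4*q*B*\<beta>^2 - 2*q*A + 4*q^2*d^2*\<beta>^2 - 4*q^2*B*\<beta> + 8*q^2*B*\<beta>*r + 4*q^2*B*\<beta>^2 - 8*q^2*B*\<beta>^2*r - 4*q^2*B*d*\<beta> - 8*q^3*B*\<beta>*r + 8*q^3*B*\<beta>^2*r + 4*q^3*B*d^2*\<beta>^2) = 0" using assms by algebra

lemma stepc_z_s: fixes q A B d \<beta> r bp :: real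
  assumes R1: "d^2*(1+q*B) - B = 0" and R2: "2*d*(1+q*B) - (1+q)*B + A = 0" and R3: "\<beta>*(1-q)*B - A = 0"
    and R4: "2*r*(1-q) - 1 = 0" and R5: "bp*d - A = 0"
  shows "(- 4*d + 2*B - 2*B*\<beta> + 4*q*d^2*\<beta> - 2*q*B + 8*q*B*r + 2*q*B*\<beta> - 8*q*B*\<beta>*r - 4*q*B*d - 8*q^2*B*r + 8*q^2*B*\<beta>*r + 4*q^2*B*d^2*\<beta>) = 0" using assms by algebra

lemma stepc_z_vp: fixes q A B d \<beta> r bp :: real
  assumes R1: "d^2*(1+q*B) - B = 0" and R2: "2*d*(1+q*B) - (1+q)*B + A = 0" and R3: "\<beta>*(1-q)*B - A = 0"
    and R4: "2*r*(1-q) - 1 = 0" and R5: "bp*d - A = 0"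
  shows "(- 4*d + 2*B - 2*A + 4*q*d^2*\<beta> + 2*q*B - 4*q*B*d - 2*q*B*d*\<beta> + 2*q*A*d*\<beta> - 2*q^2*B*d*\<beta> + 4*q^2*B*d^2*\<beta>) = 0" using assms by algebra

lemma stepc_ym_ym: fixes q A B d \<beta> r bp :: real
  assumes R1: "d^2*(1+q*B) - B = 0" and R2: "2*d*(1+q*B) - (1+q)*B + A = 0" and R3: "\<beta>*(1-q)*B - A = 0"
    and R4: "2*r*(1-q) - 1 = 0" and R5: "bp*d - A = 0"
  shows "(- 2*q*B*\<beta>^2 + 2*q*A*\<beta> + 2*q^2*d^2*\<beta>^2 + 2*q^2*B*\<beta>^2 - 4*q^2*B*\<beta>^2*r - 2*q^2*A*\<beta> + 4*q^2*A*\<beta>*r + 4*q^3*B*\<beta>^2*r + 2*q^3*B*d^2*\<beta>^2 - 4*q^3*A*\<beta>*r) = 0" using assms by algebra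

lemma stepc_ym_sm: fixes q A B d \<beta> r bp :: real
  assumes R1: "d^2*(1+q*B) - B = 0" and R2: "2*d*(1+q*B) - (1+q)*B + A = 0" and R3: "\<beta>*(1-q)*B - A = 0"
    and R4: "2*r*(1-q) - 1 = 0" and R5: "bp*d - A = 0"
  shows "(4*q*B*\<beta>^2 - 2*q*A*\<beta> - 4*q*A*\<beta>*r - 4*q^2*d^2*\<beta>^2 - 4*q^2*B*\<beta>^2 + 8*q^2*B*\<beta>^2*r + 2*q^2*A*\<beta> - 8*q^3*B*\<beta>^2*r - 4*q^3*B*d^2*\<beta>^2 + 4*q^3*A*\<beta>*r) = 0" using assms by algebra

lemma stepc_ym_v: fixes q A B d \<beta> r bp :: real
  assumes R1: "d^2*(1+q*B) - B = 0" and R2: "2*d*(1+q*B) - (1+q)*B + A = 0" and R3: "\<beta>*(1-q)*B - A = 0"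
    and R4: "2*r*(1-q) - 1 = 0" and R5: "bp*d - A = 0"
  shows "(- 2*q*d*\<beta>*bp + 4*q*B*\<beta>^2 - 2*q*A*\<beta> - 4*q^2*d^2*\<beta>^2 - 4*q^2*B*\<beta>^2 + 8*q^2*B*\<beta>^2*r + 2*q^2*A*\<beta> - 4*q^2*A*\<beta>*r - 8*q^3*B*\<beta>^2*r - 4*q^3*B*d^2*\<beta>^2 + 4*q^3*A*\<beta>*r) = 0" using assms by algebra

lemma stepc_ym_s: fixes q A B d \<beta> r bp :: real
  assumes R1: "d^2*(1+q*B) - B = 0" and R2: "2*d*(1+q*B) - (1+q)*B + A = 0" and R3: "\<beta>*(1-q)*B - A = 0"
    and R4: "2*r*(1-q) - 1 = 0" and R5: "bp*d - A = 0"
  shows "(2*B*\<beta> - 2*A - 4*q*d^2*\<beta> - 2*q*B*\<beta> + 8*q*B*\<beta>*r + 2*q*A - 4*q*A*r - 8*q^2*B*\<beta>*r - 4*q^2*B*d^2*\<beta> + 4*q^2*A*r) = 0" using assms by algebra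

lemma stepc_ym_vp: fixes q A B d \<beta> r bp :: real
  assumes R1: "d^2*(1+q*B) - B = 0" and R2: "2*d*(1+q*B) - (1+q)*B + A = 0" and R3: "\<beta>*(1-q)*B - A = 0"
    and R4: "2*r*(1-q) - 1 = 0" and R5: "bp*d - A = 0"
  shows "(- 4*q*d^2*\<beta> + 2*q*B*d*\<beta> - 2*q*A*d*\<beta> + 2*q^2*B*d*\<beta> - 4*q^2*B*d^2*\<beta>) = 0" using assms by algebra

lemma stepc_sm_sm: fixes q A B d \<beta> r bp :: real
  assumes R1: "d^2*(1+q*B) - B = 0" and R2: "2*d*(1+q*B) - (1+q)*B + A = 0" and R3: "\<beta>*(1-q)*B - A = 0"
    and R4: "2*r*(1-q) - 1 = 0" and R5: "bp*d - A = 0"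
  shows "(- 2*q*B*\<beta>^2 + 4*q*A*\<beta>*r + 2*q^2*d^2*\<beta>^2 + 2*q^2*B*\<beta>^2 - 4*q^2*B*\<beta>^2*r - 4*q^2*A*\<beta>*r + 4*q^3*B*\<beta>^2*r + 2*q^3*B*d^2*\<beta>^2) = 0" using assms by algebra

lemma stepc_sm_v: fixes q A B d \<beta> r bp :: real
  assumes R1: "d^2*(1+q*B) - B = 0" and R2: "2*d*(1+q*B) - (1+q)*B + A = 0" and R3: "\<beta>*(1-q)*B - A = 0"
    and R4: "2*r*(1-q) - 1 = 0" and R5: "bp*d - A = 0"
  shows "(2*q*d*\<beta>*bp - 4*q*B*\<beta>^2 + 4*q*A*\<beta>*r + 4*q^2*d^2*\<beta>^2 + 4*q^2*B*\<beta>^2 - 8*q^2*B*\<beta>^2*r - 4*q^2*A*\<beta>*r + 8*q^3*B*\<beta>^2*r + 4*q^3*B*d^2*\<beta>^2) = 0" using assms by algebra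

lemma stepc_sm_s: fixes q A B d \<beta> r bp :: real
  assumes R1: "d^2*(1+q*B) - B = 0" and R2: "2*d*(1+q*B) - (1+q)*B + A = 0" and R3: "\<beta>*(1-q)*B - A = 0"
    and R4: "2*r*(1-q) - 1 = 0" and R5: "bp*d - A = 0"
  shows "(- 2*B*\<beta> + 4*A*r + 4*q*d^2*\<beta> + 2*q*B*\<beta> - 8*q*B*\<beta>*r - 4*q*A*r + 8*q^2*B*\<beta>*r + 4*q^2*B*d^2*\<beta>) = 0" using assms by algebra

lemma stepc_sm_vp: fixes q A B d \<beta> r bp :: real
  assumes R1: "d^2*(1+q*B) - B = 0" and R2: "2*d*(1+q*B) - (1+q)*B + A = 0" and R3: "\<beta>*(1-q)*B - A = 0"
    and R4: "2*r*(1-q) - 1 = 0" and R5: "bp*d - A = 0"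
  shows "(4*q*d^2*\<beta> - 2*q*B*d*\<beta> + 2*q*A*d*\<beta> - 2*q^2*B*d*\<beta> + 4*q^2*B*d^2*\<beta>) = 0" using assms by algebra

lemma stepc_v_v: fixes q A B d \<beta> r bp :: real
  assumes R1: "d^2*(1+q*B) - B = 0" and R2: "2*d*(1+q*B) - (1+q)*B + A = 0" and R3: "\<beta>*(1-q)*B - A = 0"
    and R4: "2*r*(1-q) - 1 = 0" and R5: "bp*d - A = 0"
  shows "(2*q*d*\<beta>*bp - 2*q*B*\<beta>^2 + 2*q^2*d^2*\<beta>^2 + 2*q^2*B*\<beta>^2 - 4*q^2*B*\<beta>^2*r + 4*q^3*B*\<beta>^2*r + 2*q^3*B*d^2*\<beta>^2) = 0" using assms by algebra

lemma stepc_v_s: fixes q A B d \<beta> r bp :: real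
  assumes R1: "d^2*(1+q*B) - B = 0" and R2: "2*d*(1+q*B) - (1+q)*B + A = 0" and R3: "\<beta>*(1-q)*B - A = 0"
    and R4: "2*r*(1-q) - 1 = 0" and R5: "bp*d - A = 0"
  shows "(2*d*bp - 2*B*\<beta> + 4*q*d^2*\<beta> + 2*q*B*\<beta> - 8*q*B*\<beta>*r + 8*q^2*B*\<beta>*r + 4*q^2*B*d^2*\<beta>) = 0" using assms by algebra

lemma stepc_v_vp: fixes q A B d \<beta> r bp :: real
  assumes R1: "d^2*(1+q*B) - B = 0" and R2: "2*d*(1+q*B) - (1+q)*B + A = 0" and R3: "\<beta>*(1-q)*B - A = 0"
    and R4: "2*r*(1-q) - 1 = 0" and R5: "bp*d - A = 0"
  shows "(2*d*bp - 2*A + 4*q*d^2*\<beta> - 2*q*B*d*\<beta> + 2*q*A*d*\<beta> - 2*q^2*B*d*\<beta> + 4*q^2*B*d^2*\<beta>) = 0" using assms by algebra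

lemma stepc_s_s: fixes q A B d \<beta> r bp :: real
  assumes R1: "d^2*(1+q*B) - B = 0" and R2: "2*d*(1+q*B) - (1+q)*B + A = 0" and R3: "\<beta>*(1-q)*B - A = 0"
    and R4: "2*r*(1-q) - 1 = 0" and R5: "bp*d - A = 0"
  shows "(2*d^2 - 4*B*r + 4*q*B*r + 2*q*B*d^2) = 0" using assms by algebra

lemma stepc_s_vp: fixes q A B d \<beta> r bp :: real
  assumes R1: "d^2*(1+q*B) - B = 0" and R2: "2*d*(1+q*B) - (1+q)*B + A = 0" and R3: "\<beta>*(1-q)*B - A = 0"
    and R4: "2*r*(1-q) - 1 = 0" and R5: "bp*d - A = 0"
  shows "(4*d^2 - 2*B*d + 2*A*d - 2*q*B*d + 4*q*B*d^2) = 0" using assms by algebra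

lemma stepc_vp_vp: fixes q A B d \<beta> r bp :: real
  assumes R1: "d^2*(1+q*B) - B = 0" and R2: "2*d*(1+q*B) - (1+q)*B + A = 0" and R3: "\<beta>*(1-q)*B - A = 0"
    and R4: "2*r*(1-q) - 1 = 0" and R5: "bp*d - A = 0"
  shows "(2*d^2 + 2*B - 2*B*d + 2*A*d - 2*q*B*d + 2*q*B*d^2) = 0" using assms by algebra

lemma step_expand:
  fixes z ym sm v s vp y zp :: "'a::real_inner" and q r A B a b bp d \<beta> fm fy gz gzp :: real
  assumes hy: "y = (1-\<beta>) *\<^sub>R z + \<beta> *\<^sub>R (ym - sm - v)"
    and hzp: "zp = (1-q*d) *\<^sub>R z + (q*d) *\<^sub>R y - d *\<^sub>R s - d *\<^sub>R vp"
  shows "Phi2 q r B ((1+q)*B-A) bp zp y s vp fy gzp - Phi2 q r A a b z ym sm v fm gz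
   + (1-q)*(B-A)*(-(2*fy - 2*inner s y + q*inner y y + 2*r*inner (s - q *\<^sub>R y) (s - q *\<^sub>R y)))
   + (1-q)*A*(2*fm - (2*fy + 2*inner s (ym - y) + q*inner (ym - y) (ym - y) + 2*r*inner (sm - s - q *\<^sub>R (ym - y)) (sm - s - q *\<^sub>R (ym - y))))
   + bp*(2*gzp - 2*gz - 2*inner v (zp - z))
   + (a - q*A + bp - b)*(2*gz)
   + (a - q*A)*(2*inner v z - 2*gz)
   + A*inner (v - vp) (v - vp) + (B - A)*inner vp vp = (- 4*q*d*\<beta> + 4*q*B*\<beta> - 2*q*B*\<beta>^2 - 2*q*A + 2*q^2*d^2*\<beta>^2 + 2*q^2*B - 4*q^2*B*r - 4*q^2*B*\<beta> + 8*q^2*B*\<beta>*r + 2*q^2*B*\<beta>^2 - 4*q^2*B*\<beta>^2*r - 4*q^2*B*d*\<beta> + 4*q^3*B*r - 8*q^3*B*\<beta>*r + 4*q^3*B*\<beta>^2*r + 2*q^3*B*d^2*\<beta>^2) * inner z z + (4*q*d*\<beta> - 4*q*B*\<beta> + 4*q*B*\<beta>^2 + 2*q*A - 2*q*A*\<beta> - 4*q^2*d^2*\<beta>^2 + 4*q^2*B*\<beta> - 8*q^2*B*\<beta>*r - 4*q^2*B*\<beta>^2 + 8*q^2*B*\<beta>^2*r + 4*q^2*B*d*\<beta> - 2*q^2*A + 4*q^2*A*r + 2*q^2*A*\<beta> - 4*q^2*A*\<beta>*r + 8*q^3*B*\<beta>*r - 8*q^3*B*\<beta>^2*r - 4*q^3*B*d^2*\<beta>^2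 - 4*q^3*A*r + 4*q^3*A*\<beta>*r) * inner z ym + (- 4*q*d*\<beta> + 4*q*B*\<beta> - 4*q*B*\<beta>^2 - 4*q*A*r + 4*q*A*\<beta>*r + 4*q^2*d^2*\<beta>^2 - 4*q^2*B*\<beta> + 8*q^2*B*\<beta>*r + 4*q^2*B*\<beta>^2 - 8*q^2*B*\<beta>^2*r - 4*q^2*B*d*\<beta> + 4*q^2*A*r - 4*q^2*A*\<beta>*r - 8*q^3*B*\<beta>*r + 8*q^3*B*\<beta>^2*r + 4*q^3*B*d^2*\<beta>^2) * inner z sm + (- 4*q*d*\<beta> + 2*q*d*\<beta>*bp + 4*q*B*\<beta> - 4*q*B*\<beta>^2 - 2*q*A + 4*q^2*d^2*\<beta>^2 - 4*q^2*B*\<beta> + 8*q^2*B*\<beta>*r + 4*q^2*B*\<beta>^2 - 8*q^2*B*\<beta>^2*r - 4*q^2*B*d*\<beta> - 8*q^3*B*\<beta>*r + 8*q^3*B*\<beta>^2*r + 4*q^3*B*d^2*\<beta>^2) * inner z v + (- 4*d + 2*B - 2*B*\<beta> + 4*q*d^2*\<beta> - 2*q*B + 8*q*B*r + 2*q*B*\<beta> - 8*q*B*\<beta>*r - 4*q*B*d - 8*q^2*B*r + 8*q^2*B*\<beta>*r + 4*q^2*B*d^2*\<beta>) * inner z s + (- 4*d + 2*B - 2*A + 4*q*d^2*\<beta> + 2*q*B - 4*q*B*d - 2*q*B*d*\<beta> + 2*q*A*d*\<beta> - 2*q^2*B*d*\<beta> + 4*q^2*B*d^2*\<beta>) * inner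 z vp + (- 2*q*B*\<beta>^2 + 2*q*A*\<beta> + 2*q^2*d^2*\<beta>^2 + 2*q^2*B*\<beta>^2 - 4*q^2*B*\<beta>^2*r - 2*q^2*A*\<beta> + 4*q^2*A*\<beta>*r + 4*q^3*B*\<beta>^2*r + 2*q^3*B*d^2*\<beta>^2 - 4*q^3*A*\<beta>*r) * inner ym ym + (4*q*B*\<beta>^2 - 2*q*A*\<beta> - 4*q*A*\<beta>*r - 4*q^2*d^2*\<beta>^2 - 4*q^2*B*\<beta>^2 + 8*q^2*B*\<beta>^2*r + 2*q^2*A*\<beta> - 8*q^3*B*\<beta>^2*r - 4*q^3*B*d^2*\<beta>^2 + 4*q^3*A*\<beta>*r) * inner ym sm + (- 2*q*d*\<beta>*bp + 4*q*B*\<beta>^2 - 2*q*A*\<beta> - 4*q^2*d^2*\<beta>^2 - 4*q^2*B*\<beta>^2 + 8*q^2*B*\<beta>^2*r + 2*q^2*A*\<beta> - 4*q^2*A*\<beta>*r - 8*q^3*B*\<beta>^2*r - 4*q^3*B*d^2*\<beta>^2 + 4*q^3*A*\<beta>*r) * inner ym v + (2*B*\<beta> - 2*A - 4*q*d^2*\<beta> - 2*q*B*\<beta> + 8*q*B*\<beta>*r + 2*q*A - 4*q*A*r - 8*q^2*B*\<beta>*r - 4*q^2*B*d^2*\<beta> + 4*q^2*A*r) * inner ym s + (- 4*q*d^2*\<beta> + 2*q*B*d*\<beta> - 2*q*A*d*\<beta> + 2*q^2*B*d*\<beta> - 4*q^2*B*d^2*\<beta>) * inner ym vp + (- 2*q*B*\<beta>^2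 + 4*q*A*\<beta>*r + 2*q^2*d^2*\<beta>^2 + 2*q^2*B*\<beta>^2 - 4*q^2*B*\<beta>^2*r - 4*q^2*A*\<beta>*r + 4*q^3*B*\<beta>^2*r + 2*q^3*B*d^2*\<beta>^2) * inner sm sm + (2*q*d*\<beta>*bp - 4*q*B*\<beta>^2 + 4*q*A*\<beta>*r + 4*q^2*d^2*\<beta>^2 + 4*q^2*B*\<beta>^2 - 8*q^2*B*\<beta>^2*r - 4*q^2*A*\<beta>*r + 8*q^3*B*\<beta>^2*r + 4*q^3*B*d^2*\<beta>^2) * inner sm v + (- 2*B*\<beta> + 4*A*r + 4*q*d^2*\<beta> + 2*q*B*\<beta> - 8*q*B*\<beta>*r - 4*q*A*r + 8*q^2*B*\<beta>*r + 4*q^2*B*d^2*\<beta>) * inner sm s + (4*q*d^2*\<beta> - 2*q*B*d*\<beta> + 2*q*A*d*\<beta> - 2*q^2*B*d*\<beta> + 4*q^2*B*d^2*\<beta>) * inner sm vp + (2*q*d*\<beta>*bp - 2*q*B*\<beta>^2 + 2*q^2*d^2*\<beta>^2 + 2*q^2*B*\<beta>^2 - 4*q^2*B*\<beta>^2*r + 4*q^3*B*\<beta>^2*r + 2*q^3*B*d^2*\<beta>^2) * inner v v + (2*d*bp - 2*B*\<beta> + 4*q*d^2*\<beta> + 2*q*B*\<beta> - 8*q*B*\<beta>*r + 8*q^2*B*\<beta>*r + 4*q^2*B*d^2*\<beta>) * inner v s + (2*d*bp - 2*A + 4*q*d^2*\<beta> - 2*q*B*d*\<beta> + 2*q*A*d*\<beta>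 - 2*q^2*B*d*\<beta> + 4*q^2*B*d^2*\<beta>) * inner v vp + (2*d^2 - 4*B*r + 4*q*B*r + 2*q*B*d^2) * inner s s + (4*d^2 - 2*B*d + 2*A*d - 2*q*B*d + 4*q*B*d^2) * inner s vp + (2*d^2 + 2*B - 2*B*d + 2*A*d - 2*q*B*d + 2*q*B*d^2) * inner vp vp"
  unfolding hzp unfolding hy Phi2_def
  apply (simp add: inner_add_left inner_add_right inner_diff_left inner_diff_right inner_scaleR_left inner_scaleR_right)
  apply (simp add: inner_commute)
  by algebra

lemma step_ident:
  fixes z ym sm v s vp y zp :: "'a::real_inner" and q r A B a b bp d \<beta> fm fy gz gzp :: real
  assumes hy: "y = (1-\<beta>) *\<^sub>R z + \<beta> *\<^sub>R (ym - sm - v)"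
    and hzp: "zp = (1-q*d) *\<^sub>R z + (q*d) *\<^sub>R y - d *\<^sub>R s - d *\<^sub>R vp"
  assumes R1: "d^2*(1+q*B) - B = 0" and R2: "2*d*(1+q*B) - (1+q)*B + A = 0" and R3: "\<beta>*(1-q)*B - A = 0"
    and R4: "2*r*(1-q) - 1 = 0" and R5: "bp*d - A = 0"
  shows "Phi2 q r B ((1+q)*B-A) bp zp y s vp fy gzp - Phi2 q r A a b z ym sm v fm gz
   + (1-q)*(B-A)*(-(2*fy - 2*inner s y + q*inner y y + 2*r*inner (s - q *\<^sub>R y) (s - q *\<^sub>R y)))
   + (1-q)*A*(2*fm - (2*fy + 2*inner s (ym - y) + q*inner (ym - y) (ym - y) + 2*r*inner (sm - s - q *\<^sub>R (ym - y)) (sm - s - q *\<^sub>R (ym - y))))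
   + bp*(2*gzp - 2*gz - 2*inner v (zp - z))
   + (a - q*A + bp - b)*(2*gz)
   + (a - q*A)*(2*inner v z - 2*gz)
   + A*inner (v - vp) (v - vp) + (B - A)*inner vp vp = 0"
  unfolding step_expand[OF hy hzp] stepc_z_z[OF R1 R2 R3 R4 R5] stepc_z_ym[OF R1 R2 R3 R4 R5] stepc_z_sm[OF R1 R2 R3 R4 R5] stepc_z_v[OF R1 R2 R3 R4 R5] stepc_z_s[OF R1 R2 R3 R4 R5] stepc_z_vp[OF R1 R2 R3 R4 R5] stepc_ym_ym[OF R1 R2 R3 R4 R5] stepc_ym_sm[OF R1 R2 R3 R4 R5] stepc_ym_v[OF R1 R2 R3 R4 R5] stepc_ym_s[OF R1 R2 R3 R4 R5] stepc_ym_vp[OF R1 R2 R3 R4 R5] stepc_sm_sm[OF R1 R2 R3 R4 R5] stepc_sm_v[OF R1 R2 R3 R4 R5] stepc_sm_s[OF R1 R2 R3 R4 R5] stepc_sm_vp[OF R1 R2 R3 R4 R5] stepc_v_v[OF R1 R2 R3 R4 R5] stepc_v_s[OF R1 R2 R3 R4 R5] stepc_v_vp[OF R1 R2 R3 R4 R5] stepc_s_s[OF R1 R2 R3 R4 R5] stepc_s_vp[OF R1 R2 R3 R4 R5] stepc_vp_vp[OF R1 R2 R3 R4 R5] by simp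

lemma step_ineq:
  fixes z ym sm v s vp y zp :: "'a::real_inner" and q r A B a b d \<beta> fm fy gz gzp :: real
  assumes q: "0 < q" "q < 1" and A0: "0 \<le> A" and AB: "A \<le> B" and d0: "0 < d"
    and R1: "d^2*(1+q*B) = B" and R2: "2*d*(1+q*B) = (1+q)*B - A" and R3: "\<beta>*(1-q)*B = A"
    and r: "r = 1/(2*(1-q))"
    and hy: "y = (1-\<beta>) *\<^sub>R z + \<beta> *\<^sub>R (ym - sm - v)"
    and hzp: "zp = (1-q*d) *\<^sub>R z + (q*d) *\<^sub>R y - d *\<^sub>R s - d *\<^sub>R vp"
    and H1: "2*fy - 2*inner s y + q*inner y y + 2*r*inner (s - q *\<^sub>R y) (s - q *\<^sub>R y) \<le> 0"
    and H2: "2*fy + 2*inner s (ym - y) + q*inner (ym - y) (ym - y) + 2*r*inner (sm - s - q *\<^sub>R (ym - y)) (sm - s - q *\<^sub>R (ym - y)) \<le> 2*fm"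
    and H3: "gz + inner v (zp - z) \<le> gzp" and H4: "0 \<le> gz" and H5: "gz \<le> inner v z"
    and W1: "q*A \<le> a" and W2: "b \<le> a - q*A + A/d"
  shows "Phi2 q r B ((1+q)*B - A) (A/d) zp y s vp fy gzp \<le> Phi2 q r A a b z ym sm v fm gz"
proof -
  define bp where "bp = A/d"
  have r1: "d^2*(1+q*B) - B = 0" using R1 by simp
  have r2: "2*d*(1+q*B) - (1+q)*B + A = 0" using R2 by simp
  have r3: "\<beta>*(1-q)*B - A = 0" using R3 by simp
  have r4: "2*r*(1-q) - 1 = 0" using q by (simp add: r)
  have r5: "bp*d - A = 0" using d0 by (simp add: bp_def)
  note id = step_ident[OF hy hzp r1 r2 r3 r4 r5, of fy gzp a b fm gz]
  have p1: "0 \<le> (1-q)*(B-A)*(-(2*fy - 2*inner s y + q*inner y y + 2*r*inner (s - q *\<^sub>R y) (s - q *\<^sub>R y)))"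
    using q AB H1 by (intro mult_nonneg_nonneg) auto
  have p2: "0 \<le> (1-q)*A*(2*fm - (2*fy + 2*inner s (ym - y) + q*inner (ym - y) (ym - y) + 2*r*inner (sm - s - q *\<^sub>R (ym - y)) (sm - s - q *\<^sub>R (ym - y))))"
    using q A0 H2 by (intro mult_nonneg_nonneg) auto
  have bp0: "0 \<le> bp" using A0 d0 by (simp add: bp_def)
  have p3: "0 \<le> bp*(2*gzp - 2*gz - 2*inner v (zp - z))"
    using bp0 H3 by (intro mult_nonneg_nonneg) auto
  have p4: "0 \<le> (a - q*A + bp - b)*(2*gz)"
    using W2 H4 by (intro mult_nonneg_nonneg) (auto simp: bp_def)
  have p5: "0 \<le> (a - q*A)*(2*inner v z - 2*gz)"
    using W1 H5 by (intro mult_nonneg_nonneg) auto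
  have p6: "0 \<le> A*inner (v - vp) (v - vp)" using A0 by simp
  have p7: "0 \<le> (B - A)*inner vp vp" using AB by simp
  from id p1 p2 p3 p4 p5 p6 p7 show ?thesis unfolding bp_def[symmetric] by linarith
qed

declare itemA.simps(2)[simp del]

definition aaW :: "real \<Rightarrow> nat \<Rightarrow> real" where
  "aaW q k = (case k of 0 \<Rightarrow> 0 | Suc j \<Rightarrow> (1+q)*itemA q (Suc j) - itemA q j)"
definition bbW :: "real \<Rightarrow> nat \<Rightarrow> real" where
  "bbW q k = (case k of 0 \<Rightarrow> 0 | Suc j \<Rightarrow> itemA q j / itemDelta q j)"

lemma weights:
  fixes q :: real assumes q: "0 < q" "q < 1"
  shows "q * itemA q k \<le> aaW q k" and "bbW q k \<le> aaW q k - q * itemA q k + itemA q k / itemDelta q k"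
    and "0 \<le> bbW q k" and "bbW q k \<le> aaW q k"
proof -
  have all: "q * itemA q k \<le> aaW q k \<and> bbW q k \<le> aaW q k - q * itemA q k + itemA q k / itemDelta q k
    \<and> 0 \<le> bbW q k \<and> bbW q k \<le> aaW q k"
  proof (cases k)
    case 0
    thus ?thesis by (simp add: aaW_def bbW_def)
  next
    case (Suc j)
    define P where "P = itemA q j"
    define B where "B = itemA q (Suc j)"
    define d where "d = itemDelta q j"
    define S where "S = sqrt (B * (1 + q*B))"
    have P0: "0 \<le> P" and PB: "P \<le> B" and B0: "0 < B" using itemA_basic[OF q, of j] by (auto simp: P_def B_def)
    have root: "(1+q)*B - P = 2*S" using itemA_root[OF q, of j] by (simp add: P_def B_def S_def)
    have d0: "0 < d" using itemDelta_props(1)[OF q, of j] by (simp add: d_def)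
    have dS: "d * S = B" using itemDelta_props(4)[OF q, of j] by (simp add: d_def S_def B_def)
    have BdS: "B / d = S" using dS d0 by (simp add: field_simps)
    have Pd: "P / d \<le> S" using PB d0 BdS by (metis divide_right_mono less_imp_le)
    have S0: "0 \<le> S" using B0 q by (simp add: S_def)
    have "(q*B)^2 \<le> B * (1 + q*B)"
    proof -
      have "(q*B)^2 = q * (q * B * B)" by (simp add: power2_eq_square)
      also have "\<dots> \<le> 1 * (q * B * B)" using q B0 by (intro mult_right_mono) auto
      also have "\<dots> \<le> B + q*B*B" using B0 by simp
      finally show ?thesis by (simp add: algebra_simps)
    qed
    hence qBS: "q*B \<le> S" unfolding S_def using q B0 by (metis real_sqrt_le_mono real_sqrt_abs abs_of_nonneg less_imp_le mult_nonneg_nonneg)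
    have e0: "0 \<le> itemA q (Suc j) / itemDelta q (Suc j)"
      using itemA_basic[OF q, of j] itemDelta_props(1)[OF q, of "Suc j"] by (intro divide_nonneg_pos) auto
    have aa: "aaW q k = 2*S" using root by (simp add: aaW_def Suc P_def B_def)
    have bb: "bbW q k = P / d" by (simp add: bbW_def Suc P_def d_def)
    have Ak: "itemA q k = B" by (simp add: Suc B_def)
    have bb0: "0 \<le> P / d" using P0 d0 by simp
    show ?thesis unfolding aa bb Ak using Pd qBS S0 bb0 e0 root PB
      by (simp add: Suc B_def[symmetric])
  qed
  thus "q * itemA q k \<le> aaW q k" and "bbW q k \<le> aaW q k - q * itemA q k + itemA q k / itemDelta q k"
    and "0 \<le> bbW q k" and "bbW q k \<le> aaW q k" by auto
qed

lemma proxitem_Suc: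
  fixes \<mu> L :: real
  defines "q \<equiv> \<mu> / L"
  shows "proxitem \<mu> L df g x0 (Suc k) =
    (let x = fst (proxitem \<mu> L df g x0 k); z = snd (proxitem \<mu> L df g x0 k);
         \<beta> = itemBeta q k; \<delta> = itemDelta q k;
         y = (1 - \<beta>) *\<^sub>R z + \<beta> *\<^sub>R x;
         zb = (1 - q * \<delta>) *\<^sub>R z + (q * \<delta>) *\<^sub>R y - (\<delta> / L) *\<^sub>R df y;
         z' = prox (\<delta> / L) g zb
     in (y - (1 / L) *\<^sub>R df y - (1 / \<delta>) *\<^sub>R (zb - z'), z'))"
  by (simp add: q_def Let_def case_prod_beta)

lemma norm_interp:
  fixes f :: "'a::real_inner \<Rightarrow> real"
  assumes grad: "\<And>x. (f has_derivative (\<lambda>h. inner (df x) h)) (at x)"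
    and lip: "L-lipschitz_on UNIV df"
    and conv: "convex_on UNIV (\<lambda>x. f x - \<mu> / 2 * (norm x)^2)"
    and mu: "0 < \<mu>" "\<mu> < L"
    and q: "q = \<mu> / L" and r: "r = 1/(2*(1-q))"
    and \<sigma>: "\<sigma> = (\<lambda>w. (1/L) *\<^sub>R (df w - sst))"
    and Fh: "Fh = (\<lambda>w. (f w - fs - inner sst (w - xs)) / L)"
  shows "2*Fh b + 2*inner (\<sigma> b) (a - b) + q*inner (a - b) (a - b)
          + 2*r*inner (\<sigma> a - \<sigma> b - q *\<^sub>R (a - b)) (\<sigma> a - \<sigma> b - q *\<^sub>R (a - b)) \<le> 2*Fh a"
proof -
  have L0: "0 < L" using mu by simp
  define E where "E = f a - f b - inner (df b) (a - b)"
  define N where "N = inner (a - b) (a - b)"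
  define M where "M = inner (df a - df b - \<mu> *\<^sub>R (a - b)) (df a - df b - \<mu> *\<^sub>R (a - b))"
  have I: "\<mu>/2*N + M/(2*(L-\<mu>)) \<le> E"
    using interp[OF grad lip conv mu, of b a]
    by (simp add: E_def N_def M_def power2_norm_eq_inner)
  have e1: "Fh a - Fh b - inner (\<sigma> b) (a - b) = E / L"
    unfolding Fh \<sigma> E_def using L0
    by (simp add: inner_diff_left inner_diff_right field_simps)
  have e2: "\<sigma> a - \<sigma> b - q *\<^sub>R (a - b) = (1/L) *\<^sub>R (df a - df b - \<mu> *\<^sub>R (a - b))"
    unfolding \<sigma> q using L0 by (simp add: algebra_simps)
  have e3: "inner (\<sigma> a - \<sigma> b - q *\<^sub>R (a - b)) (\<sigma> a - \<sigma> b - q *\<^sub>R (a - b)) = M / L^2"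
    unfolding e2 M_def by (simp add: power2_eq_square)
  have e4: "2*r*(M / L^2) = M/(L*(L-\<mu>))"
    unfolding r q using mu by (simp add: field_simps power2_eq_square)
  define XX where "XX = (\<mu>/2*N + M/(2*(L-\<mu>)))/L"
  define YY where "YY = q*N + M/(L*(L-\<mu>))"
  have i1: "XX \<le> E/L" unfolding XX_def using I L0 by (simp add: divide_right_mono)
  have i2: "XX = YY/2"
    unfolding XX_def YY_def q using mu by (simp add: field_simps)
  have "YY \<le> 2*(E/L)" using i1 i2 by linarith
  hence "q*N + 2*r*(M / L^2) \<le> 2*(E/L)" unfolding e4 YY_def .
  thus ?thesis unfolding e3 N_def e1[symmetric] by (simp add: algebra_simps)
qed

theorem theorem1:
  fixes f :: "'a::{real_inner, complete_space} \<Rightarrow> real"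
    and df :: "'a \<Rightarrow> 'a"
    and g :: "'a \<Rightarrow> ereal"
    and \<mu> L :: real
    and x0 xstar :: 'a
  assumes mu_pos: "0 < \<mu>" and mu_L: "\<mu> < L"
    and grad: "\<And>x. (f has_derivative (\<lambda>h. inner (df x) h)) (at x)"
    and smooth: "L-lipschitz_on UNIV df"
    and strongly_convex: "convex_on UNIV (\<lambda>x. f x - \<mu> / 2 * (norm x)^2)"
    and g_convex: "ereal_convex g" and g_proper: "ereal_proper g" and g_lsc: "ereal_lsc g"
    and xstar_min: "\<And>y. ereal (f xstar) + g xstar \<le> ereal (f y) + g y"
  shows "\<forall>k. (norm (snd (proxitem \<mu> L df g x0 k) - xstar))^2
              \<le> 1 / (1 + (\<mu> / L) * itemA (\<mu> / L) k) * (norm (x0 - xstar))^2"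
proof
  fix k0 :: nat
  define q where "q = \<mu> / L"
  have L0: "0 < L" using mu_pos mu_L by simp
  have q: "0 < q" "q < 1" using mu_pos mu_L L0 by (auto simp: q_def field_simps)
  define r where "r = 1/(2*(1-q))"
  define X where "X k = fst (proxitem \<mu> L df g x0 k)" for k
  define Z where "Z k = snd (proxitem \<mu> L df g x0 k)" for k
  define Y where "Y k = (1 - itemBeta q k) *\<^sub>R Z k + itemBeta q k *\<^sub>R X k" for k
  define ZB where "ZB k = (1 - q * itemDelta q k) *\<^sub>R Z k + (q * itemDelta q k) *\<^sub>R Y k - (itemDelta q k / L) *\<^sub>R df (Y k)" for k
  have X0: "X 0 = x0" and Z0: "Z 0 = x0" by (simp_all add: X_def Z_def)
  have Zs: "Z (Suc k) = prox (itemDelta q k / L) g (ZB k)" for k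
    unfolding Z_def ZB_def Y_def X_def proxitem_Suc q_def[symmetric] by (simp add: Let_def)
  have Xs: "X (Suc k) = Y k - (1/L) *\<^sub>R df (Y k) - (1 / itemDelta q k) *\<^sub>R (ZB k - Z (Suc k))" for k
    unfolding Zs unfolding Z_def ZB_def Y_def X_def proxitem_Suc q_def[symmetric] by (simp add: Let_def)
  have ninf: "\<And>x. g x \<noteq> -\<infinity>" using g_proper by (auto simp: ereal_proper_def)
  define gr where "gr w = real_of_ereal (g w)" for w
  define gs where "gs = gr xstar"
  define sst where "sst = df xstar"
  note xs = xstar_props[OF grad smooth g_convex g_proper xstar_min]
  have gxs: "g xstar \<noteq> \<infinity>"
  proof
    assume "g xstar = \<infinity>" with xs(1) show False by simp
  qed
  have subx: "gs - inner sst (w - xstar) \<le> gr w" if "g w \<noteq> \<infinity>" for w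
    using xs(2)[OF that] by (simp add: gs_def gr_def sst_def)
  have minor: "ereal ((gs + inner sst xstar) + inner (- sst) w) \<le> g w" for w
  proof -
    have "(gs + inner sst xstar) + inner (- sst) w = real_of_ereal (g xstar) - inner (df xstar) (w - xstar)"
      by (simp add: gs_def gr_def sst_def inner_diff_right)
    thus ?thesis using xs(3)[of w] by simp
  qed
  have dpos: "0 < itemDelta q k" for k using itemDelta_props(1)[OF q] .
  have gam: "0 < itemDelta q k / L" for k using dpos L0 by simp
  note pp = prox_props[OF g_convex ninf g_lsc gxs minor gam]
  have Zfin: "g (Z (Suc k)) \<noteq> \<infinity>" for k unfolding Zs by (rule pp(1))
  have Zsub: "gr (Z (Suc k)) + inner ((1 / (itemDelta q k / L)) *\<^sub>R (ZB k - Z (Suc k))) (w - Z (Suc k)) \<le> gr w"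
    if "g w \<noteq> \<infinity>" for k w
    unfolding Zs gr_def by (rule pp(2)[OF that])
  define \<sigma> where "\<sigma> = (\<lambda>w. (1/L) *\<^sub>R (df w - sst))"
  define Fh where "Fh = (\<lambda>w. (f w - f xstar - inner sst (w - xstar)) / L)"
  define Gh where "Gh = (\<lambda>w. (gr w - gs + inner sst (w - xstar)) / L)"
  define NU where "NU k = (case k of 0 \<Rightarrow> 0 | Suc j \<Rightarrow> Y j - \<sigma> (Y j) - X (Suc j))" for k
  define YM where "YM k = (case k of 0 \<Rightarrow> x0 | Suc j \<Rightarrow> Y j)" for k
  define GZ where "GZ k = (case k of 0 \<Rightarrow> 0 | Suc j \<Rightarrow> Gh (Z (Suc j)))" for k
  have NI: "2*Fh b + 2*inner (\<sigma> b) (a - b) + q*inner (a - b) (a - b)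
          + 2*r*inner (\<sigma> a - \<sigma> b - q *\<^sub>R (a - b)) (\<sigma> a - \<sigma> b - q *\<^sub>R (a - b)) \<le> 2*Fh a" for a b
    by (rule norm_interp[OF grad smooth strongly_convex mu_pos mu_L q_def r_def \<sigma>_def Fh_def])
  have \<sigma>x: "\<sigma> xstar = 0" by (simp add: \<sigma>_def sst_def)
  have Fhx: "Fh xstar = 0" by (simp add: Fh_def)
  have Ghx: "Gh xstar = 0" by (simp add: Gh_def gs_def)
  have Gh0: "0 \<le> Gh w" if "g w \<noteq> \<infinity>" for w
    using subx[OF that] L0 by (simp add: Gh_def)
  have NUs: "NU (Suc k) = (1/L) *\<^sub>R sst + (1 / itemDelta q k) *\<^sub>R (ZB k - Z (Suc k))" for k
    unfolding NU_def Xs \<sigma>_def by (simp add: algebra_simps)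
  have gsub: "Gh (Z (Suc k)) + inner (NU (Suc k)) (w - Z (Suc k)) \<le> Gh w" if "g w \<noteq> \<infinity>" for k w
  proof -
    have h: "gr (Z (Suc k)) + inner ((L / itemDelta q k) *\<^sub>R (ZB k - Z (Suc k))) (w - Z (Suc k)) \<le> gr w"
      using Zsub[OF that, of k] by simp
    have "L * inner (NU (Suc k)) (w - Z (Suc k)) = inner sst (w - Z (Suc k)) + inner ((L / itemDelta q k) *\<^sub>R (ZB k - Z (Suc k))) (w - Z (Suc k))"
      unfolding NUs using L0 by (simp add: inner_add_left algebra_simps)
    moreover have "L * (Gh w - Gh (Z (Suc k))) = gr w - gr (Z (Suc k)) + inner sst (w - Z (Suc k))"
      unfolding Gh_def using L0 by (simp add: field_simps inner_diff_right)
    ultimately have "L * inner (NU (Suc k)) (w - Z (Suc k)) \<le> L * (Gh w - Gh (Z (Suc k)))"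
      using h by linarith
    hence "inner (NU (Suc k)) (w - Z (Suc k)) \<le> Gh w - Gh (Z (Suc k))" using L0 by simp
    thus ?thesis by simp
  qed
  define Pot where "Pot k = Phi2 q r (itemA q k) (aaW q k) (bbW q k) (Z k - xstar) (YM k - xstar)
      (\<sigma> (YM k)) (NU k) (Fh (YM k)) (GZ k)" for k
  have step: "Pot (Suc k) \<le> Pot k" for k
  proof -
    define A where "A = itemA q k"
    define B where "B = itemA q (Suc k)"
    define d where "d = itemDelta q k"
    define \<beta> where "\<beta> = itemBeta q k"
    have A0: "0 \<le> A" and AB: "A \<le> B" using itemA_basic[OF q, of k] by (auto simp: A_def B_def)
    have d0: "0 < d" using dpos by (simp add: d_def)
    have R1: "d^2*(1+q*B) = B" using itemDelta_props(2)[OF q, of k] by (simp add: d_def B_def)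
    have R2: "2*d*(1+q*B) = (1+q)*B - A" using itemDelta_props(3)[OF q, of k] by (simp add: d_def B_def A_def)
    have R3: "\<beta>*(1-q)*B = A" using itemDelta_props(5)[OF q, of k] by (simp add: \<beta>_def B_def A_def)
    have hy: "Y k - xstar = (1-\<beta>) *\<^sub>R (Z k - xstar) + \<beta> *\<^sub>R ((YM k - xstar) - \<sigma> (YM k) - NU k)"
    proof (cases k)
      case 0
      have "\<beta> = 0" by (simp add: \<beta>_def 0 itemBeta_def)
      thus ?thesis by (simp add: Y_def 0 itemBeta_def)
    next
      case (Suc j)
      have e: "(YM k - xstar) - \<sigma> (YM k) - NU k = X k - xstar" by (simp add: YM_def NU_def Suc)
      show ?thesis unfolding e by (simp add: Y_def \<beta>_def algebra_simps)
    qed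
    have hzp: "Z (Suc k) - xstar = (1-q*d) *\<^sub>R (Z k - xstar) + (q*d) *\<^sub>R (Y k - xstar) - d *\<^sub>R \<sigma> (Y k) - d *\<^sub>R NU (Suc k)"
    proof -
      have "d *\<^sub>R NU (Suc k) = (d/L) *\<^sub>R sst + (ZB k - Z (Suc k))"
        unfolding NUs using d0 by (simp add: d_def scaleR_add_right)
      thus ?thesis unfolding ZB_def \<sigma>_def d_def[symmetric] by (simp add: algebra_simps)
    qed
    have H1: "2*Fh (Y k) - 2*inner (\<sigma> (Y k)) (Y k - xstar) + q*inner (Y k - xstar) (Y k - xstar)
        + 2*r*inner (\<sigma> (Y k) - q *\<^sub>R (Y k - xstar)) (\<sigma> (Y k) - q *\<^sub>R (Y k - xstar)) \<le> 0"
    proof -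
      have "2*Fh (Y k) + 2*inner (\<sigma> (Y k)) (xstar - Y k) + q*inner (xstar - Y k) (xstar - Y k)
          + 2*r*inner (\<sigma> xstar - \<sigma> (Y k) - q *\<^sub>R (xstar - Y k)) (\<sigma> xstar - \<sigma> (Y k) - q *\<^sub>R (xstar - Y k)) \<le> 2*Fh xstar"
        by (rule NI)
      moreover have "xstar - Y k = - (Y k - xstar)" by simp
      moreover have "\<sigma> xstar - \<sigma> (Y k) - q *\<^sub>R (xstar - Y k) = - (\<sigma> (Y k) - q *\<^sub>R (Y k - xstar))"
        by (simp add: \<sigma>x algebra_simps)
      ultimately show ?thesis unfolding Fhx by (simp only: inner_minus_left inner_minus_right minus_minus)
    qed
    have H2: "2*Fh (Y k) + 2*inner (\<sigma> (Y k)) ((YM k - xstar) - (Y k - xstar)) + q*inner ((YM k - xstar) - (Y k - xstar)) ((YM k - xstar) - (Y k - xstar))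
        + 2*r*inner (\<sigma> (YM k) - \<sigma> (Y k) - q *\<^sub>R ((YM k - xstar) - (Y k - xstar))) (\<sigma> (YM k) - \<sigma> (Y k) - q *\<^sub>R ((YM k - xstar) - (Y k - xstar))) \<le> 2*Fh (YM k)"
      using NI[where a="YM k" and b="Y k"] by simp
    have H3: "GZ k + inner (NU k) ((Z (Suc k) - xstar) - (Z k - xstar)) \<le> GZ (Suc k)"
    proof (cases k)
      case 0
      thus ?thesis using Gh0[OF Zfin[of 0]] by (simp add: GZ_def NU_def)
    next
      case (Suc j)
      thus ?thesis using gsub[OF Zfin[of k], of j] by (simp add: GZ_def NU_def)
    qed
    have H4: "0 \<le> GZ k"
      by (cases k) (auto simp: GZ_def intro: Gh0[OF Zfin])
    have H5: "GZ k \<le> inner (NU k) (Z k - xstar)"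
    proof (cases k)
      case 0 thus ?thesis by (simp add: GZ_def NU_def)
    next
      case (Suc j)
      have "Gh (Z (Suc j)) + inner (NU (Suc j)) (xstar - Z (Suc j)) \<le> 0"
        using gsub[OF gxs, of j] Ghx by simp
      thus ?thesis by (simp add: GZ_def Suc inner_diff_right)
    qed
    have W1: "q*A \<le> aaW q k" using weights(1)[OF q, of k] by (simp add: A_def)
    have W2: "bbW q k \<le> aaW q k - q*A + A/d" using weights(2)[OF q, of k] by (simp add: A_def d_def)
    have "Phi2 q r B ((1+q)*B - A) (A/d) (Z (Suc k) - xstar) (Y k - xstar) (\<sigma> (Y k)) (NU (Suc k)) (Fh (Y k)) (GZ (Suc k))
        \<le> Phi2 q r A (aaW q k) (bbW q k) (Z k - xstar) (YM k - xstar) (\<sigma> (YM k)) (NU k) (Fh (YM k)) (GZ k)"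
      by (rule step_ineq[OF q A0 AB d0 R1 R2 R3 r_def hy hzp H1 H2 H3 H4 H5 W1 W2])
    moreover have "aaW q (Suc k) = (1+q)*B - A" by (simp add: aaW_def A_def B_def)
    moreover have "bbW q (Suc k) = A/d" by (simp add: bbW_def A_def d_def)
    ultimately show ?thesis by (simp add: Pot_def A_def B_def YM_def)
  qed
  have mono: "Pot k \<le> Pot 0" for k
  proof (induction k)
    case 0 thus ?case by simp
  next
    case (Suc k) thus ?case using step[of k] by linarith
  qed
  have P0: "Pot 0 = 2 * inner (x0 - xstar) (x0 - xstar)"
    by (simp add: Pot_def Phi2_def aaW_def bbW_def Z0 NU_def GZ_def)
  have lower: "2*(1 + q*itemA q k)*inner (Z k - xstar) (Z k - xstar) \<le> Pot k" for k
  proof -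
    define A where "A = itemA q k"
    define a where "a = aaW q k"
    define b where "b = bbW q k"
    define v where "v = NU k"
    define z where "z = Z k - xstar"
    define ym where "ym = YM k - xstar"
    define sm where "sm = \<sigma> (YM k)"
    have A0: "0 \<le> A" using itemA_basic[OF q, of k] by (simp add: A_def)
    have res: "q*inner ym ym + 2*r*inner (sm - q *\<^sub>R ym) (sm - q *\<^sub>R ym) \<le> 2*Fh (YM k)"
      using NI[where a="YM k" and b=xstar] by (simp add: \<sigma>x Fhx ym_def sm_def)
    have t1: "0 \<le> (1-q)*A*(2*Fh (YM k) - q*inner ym ym - 2*r*inner (sm - q *\<^sub>R ym) (sm - q *\<^sub>R ym))"
      using res q A0 by (intro mult_nonneg_nonneg) auto
    have H4: "0 \<le> GZ k" by (cases k) (auto simp: GZ_def intro: Gh0[OF Zfin])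
    have H5: "GZ k \<le> inner v z"
    proof (cases k)
      case 0 thus ?thesis by (simp add: GZ_def NU_def v_def)
    next
      case (Suc j)
      have "Gh (Z (Suc j)) + inner (NU (Suc j)) (xstar - Z (Suc j)) \<le> 0"
        using gsub[OF gxs, of j] Ghx by simp
      thus ?thesis by (simp add: GZ_def Suc inner_diff_right v_def z_def)
    qed
    have ab: "b \<le> a" "0 \<le> b" using weights(3,4)[OF q, of k] by (auto simp: a_def b_def)
    have "b * GZ k \<le> a * GZ k" using ab H4 by (intro mult_right_mono) auto
    also have "a * GZ k \<le> a * inner v z" using ab H5 by (intro mult_left_mono) auto
    finally have t2: "0 \<le> 2*a*inner v z - 2*b*GZ k" by simp
    have t3: "0 \<le> A * inner v v" using A0 by simp
    show ?thesis using t1 t2 t3 unfolding Pot_def Phi2_def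
      by (simp add: A_def[symmetric] a_def[symmetric] b_def[symmetric] v_def[symmetric] z_def[symmetric] ym_def[symmetric] sm_def[symmetric])
  qed
  have pos: "0 < 1 + q * itemA q k0" using q itemA_basic[OF q, of k0] by (simp add: add_pos_nonneg)
  have "2*(1 + q*itemA q k0)*inner (Z k0 - xstar) (Z k0 - xstar) \<le> 2 * inner (x0 - xstar) (x0 - xstar)"
    using lower[of k0] mono[of k0] P0 by linarith
  hence "2*((1 + q*itemA q k0)*inner (Z k0 - xstar) (Z k0 - xstar)) \<le> 2 * inner (x0 - xstar) (x0 - xstar)"
    by (simp only: mult.assoc)
  hence "(1 + q*itemA q k0)*inner (Z k0 - xstar) (Z k0 - xstar) \<le> inner (x0 - xstar) (x0 - xstar)"
    by linarith
  hence "(1 + q*itemA q k0) * (norm (Z k0 - xstar))^2 \<le> (norm (x0 - xstar))^2"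
    by (simp only: power2_norm_eq_inner)
  hence "(norm (Z k0 - xstar))^2 \<le> (norm (x0 - xstar))^2 / (1 + q*itemA q k0)"
    using pos by (simp add: field_simps)
  thus "(norm (snd (proxitem \<mu> L df g x0 k0) - xstar))^2
              \<le> 1 / (1 + (\<mu> / L) * itemA (\<mu> / L) k0) * (norm (x0 - xstar))^2"
    by (simp add: Z_def q_def)
qed

end
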